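(* Two epistemic logic programs $\Pi_1$ and $\Pi_2$ are strongly equivalent (in any of the four senses: strongly ELP-WV-, ASP-WV-, ELP-CWV- or ASP-CWV-equivalent) if and only if they have the same SE-function, i.e. $\mathcal{SE}_{\Pi_1}=\mathcal{SE}_{\Pi_2}$.
   Context: A literal over a set of atoms $\mathcal{A}$ is an atom $a$ or $\neg a$. An interpretation is $I\subseteq\mathcal{A}$; $I\models a$ iff $a\in I$, $I\models\neg\ell$ iff $I\not\models\ell$. A (plain) logic program $(\mathcal{A},\mathcal{R})$ has rules $a_1\vee\cdots\vee a_l \leftarrow a_{l+1},\ldots,a_m,\neg\ell_1,\ldots,\neg\ell_n$ ($\ell_i$ literals); $H(r)$ head, $B(r)$ body, $B^+(r)=\{a_{l+1},\ldots,a_m\}$; $M\models r$ iff $M\models B(r)$ implies $M\cap H(r)\neq\emptyset$; $\mathrm{Mods}(\Pi)$ is the set of models. GL-reduct: $\Pi^I=(\mathcal{A},\{H(r)\leftarrow B^+(r)\mid r\in\mathcal{R},\ I\models\neg\ell\ \forall\neg\ell\in B(r)\})$. Answer set: model $M$ of $\Pi$ such that no $M'\subset M$ is a model of $\Pi^M$; $AS(\Pi)$ the set of answer sets ($\neg\neg\neg a$ treated as $\neg a$). An SE-model of $\Pi$ is $(X,Y)$ with $X\subseteq Y\subseteq\mathcal{A}$, $Y\models\Pi$, $X\models\Pi^Y$; $\mathrm{SE}(\Pi)$ the set of SE-models. An ELP is $(\mathcal{A},\mathcal{E},\mathcal{R})$ with $\mathcal{E}$ a set of epistemic literals $\mathbf{not}\,\ell$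 and rules $a_1\vee\cdots\vee a_k\leftarrow \ell_1,\ldots,\ell_m,\xi_1,\ldots,\xi_j,\neg\xi_{j+1},\ldots,\neg\xi_n$, $\xi_i\in\mathcal{E}$. Union of ELPs is componentwise; a plain logic program is an ELP with no epistemic literals. A guess is $\Phi\subseteq\mathcal{E}$; $\mathcal{I}$ is $\Phi$-compatible w.r.t. $\mathcal{E}$ iff $\mathcal{I}\neq\emptyset$, every $\mathbf{not}\,\ell\in\Phi$ has some $I\in\mathcal{I}$ with $I\not\models\ell$, and every $\mathbf{not}\,\ell\in\mathcal{E}\setminus\Phi$ has $I\models\ell$ for all $I\in\mathcal{I}$. The epistemic reduct $\Pi^\Phi=(\mathcal{A},\mathcal{R}^\Phi)$ replaces each $\mathbf{not}\,\ell\in\Phi$ by $\top$ and every other $\mathbf{not}$ by $\neg$. A candidate world view (CWV) of $\Pi$ is $\mathcal{M}=AS(\Pi^\Phi)$ that is $\Phi$-compatible w.r.t. $\mathcal{E}$, for some guess $\Phi$; a world view (WV) is a CWV whose associated guess is subset-maximal among associated guesses of CWVs. CWV-/WV-equivalence means equal sets of CWVs/WVs. Strong ELP-(C)WV-equivalence of $\Pi_1,\Pi_2$: for every ELP $\Pi$, $\Pi_1\cup\Pi$ and $\Pi_2\cup\Pi$ are (C)WV-equivalent; strong ASP-(C)WV-equivalence: the same for every plain logic program $\Pi$. $\Phi$ is realizable in $\Pi$ iff some subset of $\mathrm{Mods}(\Pi^\Phi)$ is $\Phi$-compatible w.r.t. $\mathcal{E}$. SE-function: $\mathcal{SE}_\Pi(\Phi)=\mathrm{SE}(\Pi^\Phi)$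 if $\Phi$ is realizable in $\Pi$, else $\emptyset$. *)

theory Defs
  imports Main
begin

datatype 'a lit = PosL 'a | NegL 'a

fun lit_atom :: "'a lit \<Rightarrow> 'a" where
  "lit_atom (PosL a) = a" | "lit_atom (NegL a) = a"

text \<open>Ordinary (non-epistemic) body elements of a rule:
  a positive atom a, or a negated literal (neg a, or neg neg a).\<close>
datatype 'a bodyel = BAtom 'a | BNot "'a lit"

fun bodyel_atom :: "'a bodyel \<Rightarrow> 'a" where
  "bodyel_atom (BAtom a) = a" | "bodyel_atom (BNot l) = lit_atom l"

text \<open>An epistemic literal (not l) is represented by the literal l.
  epos = epistemic literals xi occurring positively, eneg = those occurring as neg xi.\<close>
record 'a rule =
  head :: "'a set"
  body :: "'a bodyel set"
  epos :: "'a lit set"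
  eneg :: "'a lit set"

record 'a elp =
  atoms :: "'a set"
  elits :: "'a lit set"
  rules :: "'a rule set"

definition wf_elp :: "'a elp \<Rightarrow> bool" where
  "wf_elp P \<longleftrightarrow> finite (atoms P)
     \<and> (\<forall>l\<in>elits P. lit_atom l \<in> atoms P)
     \<and> (\<forall>r\<in>rules P. head r \<subseteq> atoms P \<and> bodyel_atom ` body r \<subseteq> atoms P
                     \<and> epos r \<subseteq> elits P \<and> eneg r \<subseteq> elits P)"

definition plain :: "'a elp \<Rightarrow> bool" where
  "plain P \<longleftrightarrow> elits P = {}"

definition elp_union :: "'a elp \<Rightarrow> 'a elp \<Rightarrow> 'a elp" where
  "elp_union P Q = \<lparr>atoms = atoms P \<union> atoms Q, elits = elits P \<union> elits Q,
                    rules = rules P \<union> rules Q\<rparr>"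

fun sat_lit :: "'a set \<Rightarrow> 'a lit \<Rightarrow> bool" where
  "sat_lit I (PosL a) \<longleftrightarrow> a \<in> I"
| "sat_lit I (NegL a) \<longleftrightarrow> a \<notin> I"

fun sat_bodyel :: "'a set \<Rightarrow> 'a bodyel \<Rightarrow> bool" where
  "sat_bodyel I (BAtom a) \<longleftrightarrow> a \<in> I"
| "sat_bodyel I (BNot l) \<longleftrightarrow> \<not> sat_lit I l"

definition sat_rule :: "'a set \<Rightarrow> 'a rule \<Rightarrow> bool" where
  "sat_rule M r \<longleftrightarrow> ((\<forall>b\<in>body r. sat_bodyel M b) \<longrightarrow> head r \<inter> M \<noteq> {})"

definition Mods :: "'a elp \<Rightarrow> 'a set set" where
  "Mods P = {M. M \<subseteq> atoms P \<and> (\<forall>r\<in>rules P. sat_rule M r)}"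

definition pos_body :: "'a rule \<Rightarrow> 'a set" where
  "pos_body r = {a. BAtom a \<in> body r}"

definition gl_reduct :: "'a elp \<Rightarrow> 'a set \<Rightarrow> 'a elp" where
  "gl_reduct P I = P\<lparr>rules :=
     {\<lparr>head = head r, body = BAtom ` pos_body r, epos = {}, eneg = {}\<rparr> | r.
        r \<in> rules P \<and> (\<forall>l. BNot l \<in> body r \<longrightarrow> \<not> sat_lit I l)}\<rparr>"

definition AS :: "'a elp \<Rightarrow> 'a set set" where
  "AS P = {M \<in> Mods P. \<not> (\<exists>M'. M' \<subset> M \<and> M' \<in> Mods (gl_reduct P M))}"

definition SE :: "'a elp \<Rightarrow> ('a set \<times> 'a set) set" where
  "SE P = {(X, Y). X \<subseteq> Y \<and> Y \<subseteq> atoms P \<and> Y \<in> Mods P \<and> X \<in> Mods (gl_reduct P Y)}"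

text \<open>neg neg l, with neg neg neg a treated as neg a.\<close>
fun dneg :: "'a lit \<Rightarrow> 'a bodyel" where
  "dneg (PosL a) = BNot (NegL a)"
| "dneg (NegL a) = BNot (PosL a)"

definition compatible :: "'a lit set \<Rightarrow> 'a lit set \<Rightarrow> 'a set set \<Rightarrow> bool" where
  "compatible E \<Phi> \<I> \<longleftrightarrow> \<I> \<noteq> {}
     \<and> (\<forall>l\<in>\<Phi>. \<exists>I\<in>\<I>. \<not> sat_lit I l)
     \<and> (\<forall>l\<in>E - \<Phi>. \<forall>I\<in>\<I>. sat_lit I l)"

text \<open>Epistemic reduct: (not l) in Phi becomes true (so neg(not l) becomes false and
  the rule is dropped); every other (not l) becomes neg l, and neg(not l) becomes neg neg l.\<close>
definition epi_reduct :: "'a elp \<Rightarrow> 'a lit set \<Rightarrow> 'a elp" where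
  "epi_reduct P \<Phi> = \<lparr>atoms = atoms P, elits = {}, rules =
     {\<lparr>head = head r, body = body r \<union> BNot ` (epos r - \<Phi>) \<union> dneg ` eneg r,
       epos = {}, eneg = {}\<rparr> | r. r \<in> rules P \<and> eneg r \<inter> \<Phi> = {}}\<rparr>"

definition cwv_guess :: "'a elp \<Rightarrow> 'a lit set \<Rightarrow> bool" where
  "cwv_guess P \<Phi> \<longleftrightarrow> \<Phi> \<subseteq> elits P \<and> compatible (elits P) \<Phi> (AS (epi_reduct P \<Phi>))"

definition CWVs :: "'a elp \<Rightarrow> 'a set set set" where
  "CWVs P = {\<M>. \<exists>\<Phi>. cwv_guess P \<Phi> \<and> \<M> = AS (epi_reduct P \<Phi>)}"

definition WVs :: "'a elp \<Rightarrow> 'a set set set" where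
  "WVs P = {\<M>. \<exists>\<Phi>. cwv_guess P \<Phi> \<and> \<M> = AS (epi_reduct P \<Phi>)
                    \<and> \<not> (\<exists>\<Psi>. cwv_guess P \<Psi> \<and> \<Phi> \<subset> \<Psi>)}"

definition strong_ELP_WV_eq :: "'a elp \<Rightarrow> 'a elp \<Rightarrow> bool" where
  "strong_ELP_WV_eq P1 P2 \<longleftrightarrow>
     (\<forall>P. wf_elp P \<longrightarrow> WVs (elp_union P1 P) = WVs (elp_union P2 P))"

definition strong_ASP_WV_eq :: "'a elp \<Rightarrow> 'a elp \<Rightarrow> bool" where
  "strong_ASP_WV_eq P1 P2 \<longleftrightarrow>
     (\<forall>P. wf_elp P \<and> plain P \<longrightarrow> WVs (elp_union P1 P) = WVs (elp_union P2 P))"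

definition strong_ELP_CWV_eq :: "'a elp \<Rightarrow> 'a elp \<Rightarrow> bool" where
  "strong_ELP_CWV_eq P1 P2 \<longleftrightarrow>
     (\<forall>P. wf_elp P \<longrightarrow> CWVs (elp_union P1 P) = CWVs (elp_union P2 P))"

definition strong_ASP_CWV_eq :: "'a elp \<Rightarrow> 'a elp \<Rightarrow> bool" where
  "strong_ASP_CWV_eq P1 P2 \<longleftrightarrow>
     (\<forall>P. wf_elp P \<and> plain P \<longrightarrow> CWVs (elp_union P1 P) = CWVs (elp_union P2 P))"

definition realizable :: "'a elp \<Rightarrow> 'a lit set \<Rightarrow> bool" where
  "realizable P \<Phi> \<longleftrightarrow> (\<exists>\<I>. \<I> \<subseteq> Mods (epi_reduct P \<Phi>) \<and> compatible (elits P) \<Phi> \<I>)"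

definition SE_fun :: "'a elp \<Rightarrow> 'a lit set \<Rightarrow> ('a set \<times> 'a set) set" where
  "SE_fun P \<Phi> = (if realizable P \<Phi> then SE (epi_reduct P \<Phi>) else {})"

definition same_SE_fun :: "'a elp \<Rightarrow> 'a elp \<Rightarrow> bool" where
  "same_SE_fun P1 P2 \<longleftrightarrow> elits P1 = elits P2 \<and>
     (\<forall>\<Phi>. \<Phi> \<subseteq> elits P1 \<longrightarrow> SE_fun P1 \<Phi> = SE_fun P2 \<Phi>)"

end

theory Submission
  imports Defs
begin


definition over :: "'a set \<Rightarrow> 'a rule \<Rightarrow> bool" where
  "over A r \<longleftrightarrow> head r \<subseteq> A \<and> bodyel_atom ` body r \<subseteq> A"

definition kept :: "'a set \<Rightarrow> 'a rule \<Rightarrow> bool" where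
  "kept M r \<longleftrightarrow> (\<forall>l. BNot l \<in> body r \<longrightarrow> \<not> sat_lit M l)"

definition redrule :: "'a rule \<Rightarrow> 'a rule" where
  "redrule r = \<lparr>head = head r, body = BAtom ` pos_body r, epos = {}, eneg = {}\<rparr>"

lemma rules_gl: "rules (gl_reduct P M) = redrule ` {r \<in> rules P. kept M r}"
  unfolding gl_reduct_def redrule_def kept_def by auto

lemma atoms_gl[simp]: "atoms (gl_reduct P M) = atoms P"
  unfolding gl_reduct_def by simp

lemma sat_redrule: "sat_rule M' (redrule r) \<longleftrightarrow> (pos_body r \<subseteq> M' \<longrightarrow> head r \<inter> M' \<noteq> {})"
  unfolding sat_rule_def redrule_def by auto

lemma sat_lit_loc: "lit_atom l \<in> A \<Longrightarrow> sat_lit (M \<inter> A) l = sat_lit M l"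
  by (cases l) auto

lemma sat_bodyel_loc: "bodyel_atom b \<in> A \<Longrightarrow> sat_bodyel (M \<inter> A) b = sat_bodyel M b"
  by (cases b) (auto simp: sat_lit_loc)

lemma sat_rule_loc: "over A r \<Longrightarrow> sat_rule (M \<inter> A) r = sat_rule M r"
  unfolding over_def sat_rule_def
proof -
  assume h: "head r \<subseteq> A \<and> bodyel_atom ` body r \<subseteq> A"
  have "(\<forall>b\<in>body r. sat_bodyel (M \<inter> A) b) = (\<forall>b\<in>body r. sat_bodyel M b)"
    using h sat_bodyel_loc by blast
  moreover have "(head r \<inter> (M \<inter> A) \<noteq> {}) = (head r \<inter> M \<noteq> {})" using h by blast
  ultimately show "((\<forall>b\<in>body r. sat_bodyel (M \<inter> A) b) \<longrightarrow> head r \<inter> (M \<inter> A) \<noteq> {}) =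
    ((\<forall>b\<in>body r. sat_bodyel M b) \<longrightarrow> head r \<inter> M \<noteq> {})" by simp
qed

lemma kept_loc: "over A r \<Longrightarrow> kept (M \<inter> A) r = kept M r"
  unfolding over_def kept_def
proof -
  assume h: "head r \<subseteq> A \<and> bodyel_atom ` body r \<subseteq> A"
  have "\<And>l. BNot l \<in> body r \<Longrightarrow> lit_atom l \<in> A"
    using h by (metis bodyel_atom.simps(2) image_subset_iff)
  then show "(\<forall>l. BNot l \<in> body r \<longrightarrow> \<not> sat_lit (M \<inter> A) l) = (\<forall>l. BNot l \<in> body r \<longrightarrow> \<not> sat_lit M l)"
    using sat_lit_loc by metis
qed

lemma pos_body_over: "over A r \<Longrightarrow> pos_body r \<subseteq> A"
  unfolding over_def pos_body_def by (force)

lemma sat_red_loc: "over A r \<Longrightarrow> sat_rule (M \<inter> A) (redrule r) = sat_rule M (redrule r)"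
  unfolding sat_redrule using pos_body_over[of A r] unfolding over_def by blast

lemma sat_rule_kept: "sat_rule Y r \<longleftrightarrow> (kept Y r \<longrightarrow> sat_rule Y (redrule r))"
proof (cases "kept Y r")
  case True
  have "(\<forall>b\<in>body r. sat_bodyel Y b) \<longleftrightarrow> pos_body r \<subseteq> Y"
  proof
    assume "\<forall>b\<in>body r. sat_bodyel Y b" then show "pos_body r \<subseteq> Y"
      unfolding pos_body_def by fastforce
  next
    assume a: "pos_body r \<subseteq> Y"
    show "\<forall>b\<in>body r. sat_bodyel Y b"
    proof
      fix b assume "b \<in> body r" then show "sat_bodyel Y b"
        using a True unfolding pos_body_def kept_def by (cases b) auto
    qed
  qed
  then show ?thesis using True unfolding sat_redrule by (simp add: sat_rule_def)
next
  case False
  then obtain l where "BNot l \<in> body r" "sat_lit Y l" unfolding kept_def by auto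
  then have "\<not> (\<forall>b\<in>body r. sat_bodyel Y b)" by force
  then show ?thesis using False unfolding sat_rule_def by blast
qed

lemma Mods_gl_self: "Y \<in> Mods P \<longleftrightarrow> Y \<in> Mods (gl_reduct P Y)"
  unfolding Mods_def rules_gl using sat_rule_kept by auto


definition er :: "'a lit set \<Rightarrow> 'a rule \<Rightarrow> 'a rule" where
  "er \<Phi> r = \<lparr>head = head r, body = body r \<union> BNot ` (epos r - \<Phi>) \<union> dneg ` eneg r,
       epos = {}, eneg = {}\<rparr>"

lemma rules_epi: "rules (epi_reduct P \<Phi>) = er \<Phi> ` {r \<in> rules P. eneg r \<inter> \<Phi> = {}}"
  unfolding epi_reduct_def er_def by auto

lemma atoms_epi[simp]: "atoms (epi_reduct P \<Phi>) = atoms P"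
  and elits_epi[simp]: "elits (epi_reduct P \<Phi>) = {}"
  unfolding epi_reduct_def by simp_all

lemma dneg_cases: "\<exists>l'. dneg l = BNot l' \<and> (sat_lit Y l' \<longleftrightarrow> \<not> sat_lit Y l) \<and> lit_atom l' = lit_atom l"
  by (cases l) auto

lemma dneg_notatom[simp]: "dneg l \<noteq> BAtom a"
  by (cases l) auto

lemma dneg_notatom2[simp]: "BAtom a \<noteq> dneg l"
  by (cases l) auto

lemma bodyel_atom_dneg[simp]: "bodyel_atom (dneg l) = lit_atom l"
  by (cases l) auto

lemma pos_body_er[simp]: "pos_body (er \<Phi> r) = pos_body r"
  unfolding pos_body_def er_def by auto

lemma redrule_er[simp]: "redrule (er \<Phi> r) = redrule r"
  unfolding redrule_def pos_body_er by (simp add: er_def)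

lemma kept_er: "kept Y (er \<Phi> r) \<longleftrightarrow> kept Y r \<and> (\<forall>l\<in>epos r - \<Phi>. \<not> sat_lit Y l) \<and> (\<forall>l\<in>eneg r. sat_lit Y l)"
proof -
  have "(\<forall>l. BNot l \<in> dneg ` eneg r \<longrightarrow> \<not> sat_lit Y l) \<longleftrightarrow> (\<forall>l\<in>eneg r. sat_lit Y l)"
  proof
    assume a: "\<forall>l. BNot l \<in> dneg ` eneg r \<longrightarrow> \<not> sat_lit Y l"
    show "\<forall>l\<in>eneg r. sat_lit Y l"
    proof
      fix l assume "l \<in> eneg r"
      moreover obtain l' where "dneg l = BNot l'" "sat_lit Y l' \<longleftrightarrow> \<not> sat_lit Y l"
        using dneg_cases by metis
      ultimately show "sat_lit Y l" using a by (metis image_eqI)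
    qed
  next
    assume a: "\<forall>l\<in>eneg r. sat_lit Y l"
    show "\<forall>l. BNot l \<in> dneg ` eneg r \<longrightarrow> \<not> sat_lit Y l"
    proof (intro allI impI)
      fix l assume "BNot l \<in> dneg ` eneg r"
      then obtain l0 where "l0 \<in> eneg r" "BNot l = dneg l0" by auto
      moreover obtain l' where "dneg l0 = BNot l'" "sat_lit Y l' \<longleftrightarrow> \<not> sat_lit Y l0"
        using dneg_cases by metis
      ultimately show "\<not> sat_lit Y l" using a by auto
    qed
  qed
  then show ?thesis unfolding kept_def er_def by auto
qed

lemma rules_gl_epi: "rules (gl_reduct (epi_reduct P \<Phi>) Y) =
   redrule ` {r \<in> rules P. eneg r \<inter> \<Phi> = {} \<and> kept Y r \<and> (\<forall>l\<in>epos r - \<Phi>. \<not> sat_lit Y l) \<and> (\<forall>l\<in>eneg r. sat_lit Y l)}"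
  unfolding rules_gl rules_epi
proof (intro equalityI subsetI)
  fix x assume "x \<in> redrule ` {r \<in> er \<Phi> ` {r \<in> rules P. eneg r \<inter> \<Phi> = {}}. kept Y r}"
  then obtain r where "r \<in> rules P" "eneg r \<inter> \<Phi> = {}" "kept Y (er \<Phi> r)" "x = redrule (er \<Phi> r)" by auto
  then show "x \<in> redrule ` {r \<in> rules P. eneg r \<inter> \<Phi> = {} \<and> kept Y r \<and> (\<forall>l\<in>epos r - \<Phi>. \<not> sat_lit Y l) \<and> (\<forall>l\<in>eneg r. sat_lit Y l)}"
    by (auto simp: kept_er)
next
  fix x assume "x \<in> redrule ` {r \<in> rules P. eneg r \<inter> \<Phi> = {} \<and> kept Y r \<and> (\<forall>l\<in>epos r - \<Phi>. \<not> sat_lit Y l) \<and> (\<forall>l\<in>eneg r. sat_lit Y l)}"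
  then obtain r where r: "r \<in> rules P" "eneg r \<inter> \<Phi> = {}" "kept Y (er \<Phi> r)" "x = redrule (er \<Phi> r)" by (auto simp: kept_er)
  then have "er \<Phi> r \<in> {r \<in> er \<Phi> ` {r \<in> rules P. eneg r \<inter> \<Phi> = {}}. kept Y r}" by auto
  then show "x \<in> redrule ` {r \<in> er \<Phi> ` {r \<in> rules P. eneg r \<inter> \<Phi> = {}}. kept Y r}"
    using r(4) by blast
qed

lemma gl_epi_eq:
  assumes "\<Phi> \<subseteq> \<Psi>" "\<forall>l\<in>\<Psi> - \<Phi>. \<not> sat_lit Y l"
  shows "gl_reduct (epi_reduct P \<Phi>) Y = gl_reduct (epi_reduct P \<Psi>) Y"
proof -
  have "rules (gl_reduct (epi_reduct P \<Phi>) Y) = rules (gl_reduct (epi_reduct P \<Psi>) Y)"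
    unfolding rules_gl_epi
  proof (rule arg_cong[where f="image redrule"], rule Collect_cong, rule conj_cong[OF refl])
    fix r :: "'a rule"
    have e1: "(\<forall>l\<in>epos r - \<Phi>. \<not> sat_lit Y l) \<longleftrightarrow> (\<forall>l\<in>epos r - \<Psi>. \<not> sat_lit Y l)"
      using assms by blast
    have e2: "(eneg r \<inter> \<Phi> = {} \<and> (\<forall>l\<in>eneg r. sat_lit Y l)) \<longleftrightarrow> (eneg r \<inter> \<Psi> = {} \<and> (\<forall>l\<in>eneg r. sat_lit Y l))"
      using assms by blast
    show "(eneg r \<inter> \<Phi> = {} \<and> kept Y r \<and> (\<forall>l\<in>epos r - \<Phi>. \<not> sat_lit Y l) \<and> (\<forall>l\<in>eneg r. sat_lit Y l)) =
          (eneg r \<inter> \<Psi> = {} \<and> kept Y r \<and> (\<forall>l\<in>epos r - \<Psi>. \<not> sat_lit Y l) \<and> (\<forall>l\<in>eneg r. sat_lit Y l))"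
      using e1 e2 by blast
  qed
  then show ?thesis unfolding gl_reduct_def epi_reduct_def by simp
qed

lemma epi_over: "wf_elp P \<Longrightarrow> r \<in> rules (epi_reduct P \<Phi>) \<Longrightarrow> over (atoms P) r"
proof -
  assume w: "wf_elp P" and r: "r \<in> rules (epi_reduct P \<Phi>)"
  then obtain r0 where r0: "r0 \<in> rules P" "r = er \<Phi> r0" unfolding rules_epi by auto
  have a: "head r0 \<subseteq> atoms P" "bodyel_atom ` body r0 \<subseteq> atoms P" "epos r0 \<subseteq> elits P" "eneg r0 \<subseteq> elits P"
    and b: "\<forall>l\<in>elits P. lit_atom l \<in> atoms P"
    using w r0(1) unfolding wf_elp_def by auto
  have "bodyel_atom ` body r \<subseteq> atoms P"
    unfolding r0(2) er_def using a b by auto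
  then show ?thesis unfolding over_def using a r0(2) by (simp add: er_def)
qed

lemma epi_restrict: "wf_elp P \<Longrightarrow> epi_reduct P \<Phi> = epi_reduct P (\<Phi> \<inter> elits P)"
proof -
  assume w: "wf_elp P"
  have "\<And>r. r \<in> rules P \<Longrightarrow> (eneg r \<inter> \<Phi> = {}) = (eneg r \<inter> (\<Phi> \<inter> elits P) = {})
      \<and> epos r - \<Phi> = epos r - (\<Phi> \<inter> elits P)"
    using w unfolding wf_elp_def by blast
  then have "rules (epi_reduct P \<Phi>) = rules (epi_reduct P (\<Phi> \<inter> elits P))"
    unfolding rules_epi
  proof -
    assume h: "\<And>r. r \<in> rules P \<Longrightarrow> (eneg r \<inter> \<Phi> = {}) = (eneg r \<inter> (\<Phi> \<inter> elits P) = {})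
      \<and> epos r - \<Phi> = epos r - (\<Phi> \<inter> elits P)"
    have c: "{r \<in> rules P. eneg r \<inter> \<Phi> = {}} = {r \<in> rules P. eneg r \<inter> (\<Phi> \<inter> elits P) = {}}"
      using h by blast
    have "\<And>r. r \<in> rules P \<Longrightarrow> er \<Phi> r = er (\<Phi> \<inter> elits P) r"
      unfolding er_def using h by simp
    then show "er \<Phi> ` {r \<in> rules P. eneg r \<inter> \<Phi> = {}} = er (\<Phi> \<inter> elits P) ` {r \<in> rules P. eneg r \<inter> (\<Phi> \<inter> elits P) = {}}"
      unfolding c by (intro image_cong) auto
  qed
  then show ?thesis unfolding epi_reduct_def by simp
qed

lemma epi_union_rules: "rules (epi_reduct (elp_union P Q) \<Phi>) = rules (epi_reduct P \<Phi>) \<union> rules (epi_reduct Q \<Phi>)"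
  unfolding rules_epi elp_union_def by auto

lemma epi_union_atoms[simp]: "atoms (epi_reduct (elp_union P Q) \<Phi>) = atoms P \<union> atoms Q"
  and elp_union_elits[simp]: "elits (elp_union P Q) = elits P \<union> elits Q"
  and elp_union_atoms[simp]: "atoms (elp_union P Q) = atoms P \<union> atoms Q"
  unfolding elp_union_def by simp_all


lemma Mods_comp:
  assumes "atoms U = A \<union> A'" "rules U = rules Q \<union> S" "atoms Q = A" "\<forall>r\<in>rules Q. over A r"
  shows "M \<in> Mods U \<longleftrightarrow> M \<subseteq> A \<union> A' \<and> M \<inter> A \<in> Mods Q \<and> (\<forall>r\<in>S. sat_rule M r)"
proof -
  have "(\<forall>r\<in>rules Q. sat_rule M r) \<longleftrightarrow> (\<forall>r\<in>rules Q. sat_rule (M \<inter> A) r)"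
    using assms(4) sat_rule_loc by metis
  then show ?thesis unfolding Mods_def using assms(1-3) by auto
qed

lemma Mods_gl_comp:
  assumes "atoms U = A \<union> A'" "rules U = rules Q \<union> S" "atoms Q = A" "\<forall>r\<in>rules Q. over A r"
  shows "M' \<in> Mods (gl_reduct U M) \<longleftrightarrow> M' \<subseteq> A \<union> A' \<and> M' \<inter> A \<in> Mods (gl_reduct Q (M \<inter> A))
            \<and> (\<forall>r\<in>S. kept M r \<longrightarrow> sat_rule M' (redrule r))"
proof -
  have "(\<forall>r\<in>rules Q. kept M r \<longrightarrow> sat_rule M' (redrule r)) \<longleftrightarrow>
        (\<forall>r\<in>rules Q. kept (M \<inter> A) r \<longrightarrow> sat_rule (M' \<inter> A) (redrule r))"
    using assms(4) sat_red_loc kept_loc by metis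
  moreover have "M' \<in> Mods (gl_reduct U M) \<longleftrightarrow> M' \<subseteq> A \<union> A' \<and>
      (\<forall>r\<in>rules Q. kept M r \<longrightarrow> sat_rule M' (redrule r)) \<and> (\<forall>r\<in>S. kept M r \<longrightarrow> sat_rule M' (redrule r))"
    unfolding Mods_def rules_gl using assms(1,2) by auto
  moreover have "M' \<inter> A \<in> Mods (gl_reduct Q (M \<inter> A)) \<longleftrightarrow>
      (\<forall>r\<in>rules Q. kept (M \<inter> A) r \<longrightarrow> sat_rule (M' \<inter> A) (redrule r))"
    unfolding Mods_def rules_gl using assms(3) by auto
  ultimately show ?thesis by blast
qed

lemma Mods_SE: "Y \<subseteq> atoms Q \<Longrightarrow> Y \<in> Mods Q \<longleftrightarrow> (Y, Y) \<in> SE Q"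
  unfolding SE_def using Mods_gl_self by blast

lemma gl_SE: "X \<subseteq> Y \<Longrightarrow> Y \<in> Mods Q \<Longrightarrow> X \<in> Mods (gl_reduct Q Y) \<longleftrightarrow> (X, Y) \<in> SE Q"
  unfolding SE_def Mods_def by auto

lemma AS_SE_eq:
  assumes "atoms U1 = A \<union> A'" "rules U1 = rules Q1 \<union> S" "atoms Q1 = A" "\<forall>r\<in>rules Q1. over A r"
    and "atoms U2 = A \<union> A'" "rules U2 = rules Q2 \<union> S" "atoms Q2 = A" "\<forall>r\<in>rules Q2. over A r"
    and "SE Q1 = SE Q2"
  shows "AS U1 = AS U2"
proof -
  have m: "M \<in> Mods U1 \<longleftrightarrow> M \<in> Mods U2" for M
  proof -
    have "M \<inter> A \<in> Mods Q1 \<longleftrightarrow> M \<inter> A \<in> Mods Q2"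
      using Mods_SE[of "M \<inter> A" Q1] Mods_SE[of "M \<inter> A" Q2] assms by auto
    then show ?thesis using Mods_comp[OF assms(1-4)] Mods_comp[OF assms(5-8)] by blast
  qed
  have g: "M' \<in> Mods (gl_reduct U1 M) \<longleftrightarrow> M' \<in> Mods (gl_reduct U2 M)"
    if "M \<in> Mods U1" "M' \<subseteq> M" for M M'
  proof -
    have a1: "M \<inter> A \<in> Mods Q1" using that Mods_comp[OF assms(1-4)] by blast
    have a2: "M \<inter> A \<in> Mods Q2" using that m Mods_comp[OF assms(5-8)] by blast
    have "M' \<inter> A \<in> Mods (gl_reduct Q1 (M \<inter> A)) \<longleftrightarrow> M' \<inter> A \<in> Mods (gl_reduct Q2 (M \<inter> A))"
      using gl_SE[OF _ a1, of "M' \<inter> A"] gl_SE[OF _ a2, of "M' \<inter> A"] that(2) assms(9) by blast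
    then show ?thesis using Mods_gl_comp[OF assms(1-4)] Mods_gl_comp[OF assms(5-8)] by blast
  qed
  show ?thesis unfolding AS_def
  proof (intro set_eqI iffI)
    fix M assume "M \<in> {M \<in> Mods U1. \<not> (\<exists>M'. M' \<subset> M \<and> M' \<in> Mods (gl_reduct U1 M))}"
    then show "M \<in> {M \<in> Mods U2. \<not> (\<exists>M'. M' \<subset> M \<and> M' \<in> Mods (gl_reduct U2 M))}"
      using g m by blast
  next
    fix M assume "M \<in> {M \<in> Mods U2. \<not> (\<exists>M'. M' \<subset> M \<and> M' \<in> Mods (gl_reduct U2 M))}"
    then show "M \<in> {M \<in> Mods U1. \<not> (\<exists>M'. M' \<subset> M \<and> M' \<in> Mods (gl_reduct U1 M))}"
      using g m by blast
  qed
qed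


lemma wf_lit: "wf_elp P \<Longrightarrow> l \<in> elits P \<Longrightarrow> lit_atom l \<in> atoms P"
  unfolding wf_elp_def by auto

lemma compat_restrict:
  assumes "\<forall>l\<in>E. lit_atom l \<in> A" "compatible (E \<union> E') \<Phi> \<M>"
  shows "compatible E (\<Phi> \<inter> E) ((\<lambda>M. M \<inter> A) ` \<M>)"
  using assms unfolding compatible_def by (auto simp: sat_lit_loc)

lemma SE_eq_of_real:
  assumes "wf_elp P1" "wf_elp P2" "same_SE_fun P1 P2" "\<Phi> \<subseteq> elits P1" "realizable P1 \<Phi>"
  shows "SE (epi_reduct P1 \<Phi>) = SE (epi_reduct P2 \<Phi>)"
proof -
  obtain \<I> where I: "\<I> \<subseteq> Mods (epi_reduct P1 \<Phi>)" "compatible (elits P1) \<Phi> \<I>"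
    using assms(5) unfolding realizable_def by auto
  then obtain I where "I \<in> Mods (epi_reduct P1 \<Phi>)" unfolding compatible_def by auto
  then have "(I, I) \<in> SE (epi_reduct P1 \<Phi>)" using Mods_SE[of I "epi_reduct P1 \<Phi>"]
    unfolding Mods_def by auto
  then have ne: "SE_fun P1 \<Phi> \<noteq> {}" using assms(5) unfolding SE_fun_def by auto
  have eq: "SE_fun P1 \<Phi> = SE_fun P2 \<Phi>" using assms(3,4) unfolding same_SE_fun_def by auto
  then have "realizable P2 \<Phi>" using ne unfolding SE_fun_def by (auto split: if_splits)
  then show ?thesis using eq assms(5) unfolding SE_fun_def by auto
qed

lemma same_SE_fun_sym: "same_SE_fun P1 P2 \<Longrightarrow> same_SE_fun P2 P1"
  unfolding same_SE_fun_def by auto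

lemma guess_transfer:
  assumes "wf_elp P1" "wf_elp P2" "atoms P1 = atoms P2" "elits P1 = elits P2" "same_SE_fun P1 P2"
    and "wf_elp P" "cwv_guess (elp_union P1 P) \<Phi>"
  shows "cwv_guess (elp_union P2 P) \<Phi> \<and>
         AS (epi_reduct (elp_union P1 P) \<Phi>) = AS (epi_reduct (elp_union P2 P) \<Phi>)"
proof -
  let ?A = "atoms P1" and ?E = "elits P1"
  let ?U1 = "epi_reduct (elp_union P1 P) \<Phi>" and ?U2 = "epi_reduct (elp_union P2 P) \<Phi>"
  have o1: "\<forall>r\<in>rules (epi_reduct P1 \<Phi>). over ?A r" using epi_over assms(1) by blast
  have o2: "\<forall>r\<in>rules (epi_reduct P2 \<Phi>). over ?A r" using epi_over assms(2,3) by metis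
  have g: "\<Phi> \<subseteq> ?E \<union> elits P" "compatible (?E \<union> elits P) \<Phi> (AS ?U1)"
    using assms(7) unfolding cwv_guess_def by auto
  have "realizable P1 (\<Phi> \<inter> ?E)" unfolding realizable_def
  proof (intro exI conjI)
    show "(\<lambda>M. M \<inter> ?A) ` AS ?U1 \<subseteq> Mods (epi_reduct P1 (\<Phi> \<inter> ?E))"
    proof
      fix x assume "x \<in> (\<lambda>M. M \<inter> ?A) ` AS ?U1"
      then obtain M where "M \<in> Mods ?U1" "x = M \<inter> ?A" unfolding AS_def by auto
      then have "x \<in> Mods (epi_reduct P1 \<Phi>)"
        using Mods_comp[of ?U1 ?A "atoms P" "epi_reduct P1 \<Phi>" "rules (epi_reduct P \<Phi>)" M]
          o1 epi_union_rules[of P1 P \<Phi>] by auto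
      then show "x \<in> Mods (epi_reduct P1 (\<Phi> \<inter> ?E))" using epi_restrict[OF assms(1)] by metis
    qed
    show "compatible ?E (\<Phi> \<inter> ?E) ((\<lambda>M. M \<inter> ?A) ` AS ?U1)"
      using compat_restrict[OF _ g(2)] wf_lit[OF assms(1)] by blast
  qed
  then have "SE (epi_reduct P1 (\<Phi> \<inter> ?E)) = SE (epi_reduct P2 (\<Phi> \<inter> ?E))"
    by (rule SE_eq_of_real[OF assms(1,2,5) Int_lower2])
  then have se: "SE (epi_reduct P1 \<Phi>) = SE (epi_reduct P2 \<Phi>)"
    using epi_restrict[OF assms(1)] epi_restrict[OF assms(2)] assms(4) by metis
  have as: "AS ?U1 = AS ?U2"
  proof (rule AS_SE_eq[OF _ epi_union_rules _ o1 _ epi_union_rules _ o2 se])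
    show "atoms ?U1 = ?A \<union> atoms P" by simp
    show "atoms ?U2 = ?A \<union> atoms P" using assms(3) by simp
    show "atoms (epi_reduct P1 \<Phi>) = ?A" by simp
    show "atoms (epi_reduct P2 \<Phi>) = ?A" using assms(3) by simp
  qed
  show ?thesis using as assms(4,7) unfolding cwv_guess_def by auto
qed

lemma easy_dir:
  assumes "wf_elp P1" "wf_elp P2" "atoms P1 = atoms P2" "elits P1 = elits P2" "same_SE_fun P1 P2"
    and "wf_elp P"
  shows "CWVs (elp_union P1 P) = CWVs (elp_union P2 P) \<and> WVs (elp_union P1 P) = WVs (elp_union P2 P)"
proof -
  have t1: "cwv_guess (elp_union P1 P) \<Phi> \<Longrightarrow> cwv_guess (elp_union P2 P) \<Phi> \<and>
         AS (epi_reduct (elp_union P1 P) \<Phi>) = AS (epi_reduct (elp_union P2 P) \<Phi>)" for \<Phi>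
    using guess_transfer[OF assms(1-5)] assms(6) by blast
  have t2: "cwv_guess (elp_union P2 P) \<Phi> \<Longrightarrow> cwv_guess (elp_union P1 P) \<Phi>" for \<Phi>
    using guess_transfer[OF assms(2,1) assms(3,4)[symmetric] same_SE_fun_sym[OF assms(5)]] assms(6) by blast
  have gg: "cwv_guess (elp_union P1 P) \<Phi> \<longleftrightarrow> cwv_guess (elp_union P2 P) \<Phi>" for \<Phi>
    using t1 t2 by blast
  have c: "(\<exists>\<Phi>. cwv_guess (elp_union P1 P) \<Phi> \<and> x = AS (epi_reduct (elp_union P1 P) \<Phi>))
     \<longleftrightarrow> (\<exists>\<Phi>. cwv_guess (elp_union P2 P) \<Phi> \<and> x = AS (epi_reduct (elp_union P2 P) \<Phi>))" for x
  proof
    assume "\<exists>\<Phi>. cwv_guess (elp_union P1 P) \<Phi> \<and> x = AS (epi_reduct (elp_union P1 P) \<Phi>)"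
    then obtain \<Phi> where "cwv_guess (elp_union P1 P) \<Phi>" "x = AS (epi_reduct (elp_union P1 P) \<Phi>)" by blast
    then show "\<exists>\<Phi>. cwv_guess (elp_union P2 P) \<Phi> \<and> x = AS (epi_reduct (elp_union P2 P) \<Phi>)"
      using t1[of \<Phi>] by auto
  next
    assume "\<exists>\<Phi>. cwv_guess (elp_union P2 P) \<Phi> \<and> x = AS (epi_reduct (elp_union P2 P) \<Phi>)"
    then obtain \<Phi> where "cwv_guess (elp_union P2 P) \<Phi>" "x = AS (epi_reduct (elp_union P2 P) \<Phi>)" by blast
    then show "\<exists>\<Phi>. cwv_guess (elp_union P1 P) \<Phi> \<and> x = AS (epi_reduct (elp_union P1 P) \<Phi>)"
      using t1[of \<Phi>] t2[of \<Phi>] by auto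
  qed
  have w: "(\<exists>\<Phi>. cwv_guess (elp_union P1 P) \<Phi> \<and> x = AS (epi_reduct (elp_union P1 P) \<Phi>)
              \<and> \<not> (\<exists>\<Psi>. cwv_guess (elp_union P1 P) \<Psi> \<and> \<Phi> \<subset> \<Psi>))
     \<longleftrightarrow> (\<exists>\<Phi>. cwv_guess (elp_union P2 P) \<Phi> \<and> x = AS (epi_reduct (elp_union P2 P) \<Phi>)
              \<and> \<not> (\<exists>\<Psi>. cwv_guess (elp_union P2 P) \<Psi> \<and> \<Phi> \<subset> \<Psi>))" for x
  proof
    assume "\<exists>\<Phi>. cwv_guess (elp_union P1 P) \<Phi> \<and> x = AS (epi_reduct (elp_union P1 P) \<Phi>)
              \<and> \<not> (\<exists>\<Psi>. cwv_guess (elp_union P1 P) \<Psi> \<and> \<Phi> \<subset> \<Psi>)"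
    then obtain \<Phi> where "cwv_guess (elp_union P1 P) \<Phi>" "x = AS (epi_reduct (elp_union P1 P) \<Phi>)"
       "\<not> (\<exists>\<Psi>. cwv_guess (elp_union P1 P) \<Psi> \<and> \<Phi> \<subset> \<Psi>)" by blast
    then show "\<exists>\<Phi>. cwv_guess (elp_union P2 P) \<Phi> \<and> x = AS (epi_reduct (elp_union P2 P) \<Phi>)
              \<and> \<not> (\<exists>\<Psi>. cwv_guess (elp_union P2 P) \<Psi> \<and> \<Phi> \<subset> \<Psi>)"
      using t1[of \<Phi>] gg by auto
  next
    assume "\<exists>\<Phi>. cwv_guess (elp_union P2 P) \<Phi> \<and> x = AS (epi_reduct (elp_union P2 P) \<Phi>)
              \<and> \<not> (\<exists>\<Psi>. cwv_guess (elp_union P2 P) \<Psi> \<and> \<Phi> \<subset> \<Psi>)"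
    then obtain \<Phi> where "cwv_guess (elp_union P2 P) \<Phi>" "x = AS (epi_reduct (elp_union P2 P) \<Phi>)"
       "\<not> (\<exists>\<Psi>. cwv_guess (elp_union P2 P) \<Psi> \<and> \<Phi> \<subset> \<Psi>)" by blast
    then show "\<exists>\<Phi>. cwv_guess (elp_union P1 P) \<Phi> \<and> x = AS (epi_reduct (elp_union P1 P) \<Phi>)
              \<and> \<not> (\<exists>\<Psi>. cwv_guess (elp_union P1 P) \<Psi> \<and> \<Phi> \<subset> \<Psi>)"
      using t1[of \<Phi>] t2[of \<Phi>] gg by auto
  qed
  have "CWVs (elp_union P1 P) = CWVs (elp_union P2 P)"
    unfolding CWVs_def by (rule Collect_cong) (rule c)
  moreover have "WVs (elp_union P1 P) = WVs (elp_union P2 P)"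
    unfolding WVs_def by (rule Collect_cong) (rule w)
  ultimately show ?thesis by blast
qed



definition mkr :: "'a set \<Rightarrow> 'a bodyel set \<Rightarrow> 'a rule" where
  "mkr h b = \<lparr>head = h, body = b, epos = {}, eneg = {}\<rparr>"

definition Rrules :: "'a set \<Rightarrow> 'a set set \<Rightarrow> ('a set \<Rightarrow> 'a set) \<Rightarrow> ('a set \<Rightarrow> 'a) \<Rightarrow> 'a rule set" where
  "Rrules A KK B f =
     {mkr (f ` KK) {}}
   \<union> {mkr {} {BAtom (f K), BAtom a} | K a. K \<in> KK \<and> a \<in> A - K}
   \<union> {mkr {} {BAtom (f K), BNot (PosL a)} | K a. K \<in> KK \<and> a \<in> K}
   \<union> {mkr {a} {BAtom (f K)} | K a. K \<in> KK \<and> a \<in> B K}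
   \<union> {mkr {a} {BAtom (f K), BAtom b} | K a b. K \<in> KK \<and> a \<in> K - B K \<and> b \<in> K - B K}"

lemma sat_mkr: "sat_rule M (mkr h b) \<longleftrightarrow> ((\<forall>x\<in>b. sat_bodyel M x) \<longrightarrow> h \<inter> M \<noteq> {})"
  unfolding sat_rule_def mkr_def by simp

lemma kept_mkr: "kept M (mkr h b) \<longleftrightarrow> (\<forall>l. BNot l \<in> b \<longrightarrow> \<not> sat_lit M l)"
  unfolding kept_def mkr_def by simp

lemma sat_red_mkr: "sat_rule M' (redrule (mkr h b)) \<longleftrightarrow> ({a. BAtom a \<in> b} \<subseteq> M' \<longrightarrow> h \<inter> M' \<noteq> {})"
  unfolding sat_redrule mkr_def pos_body_def by simp

lemma ball_img2: "(\<forall>r\<in>{g K a | K a. P K a}. Q r) \<longleftrightarrow> (\<forall>K a. P K a \<longrightarrow> Q (g K a))"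
  by blast

lemma ball_img3: "(\<forall>r\<in>{g K a b | K a b. P K a b}. Q r) \<longleftrightarrow> (\<forall>K a b. P K a b \<longrightarrow> Q (g K a b))"
  by blast

lemma satR:
  "(\<forall>r\<in>Rrules A KK B f. sat_rule M r) \<longleftrightarrow>
     (f ` KK \<inter> M \<noteq> {}) \<and> (\<forall>K\<in>KK. f K \<in> M \<longrightarrow> (\<forall>a\<in>A - K. a \<notin> M) \<and> K \<subseteq> M \<and> B K \<subseteq> M
        \<and> (\<forall>a\<in>K - B K. \<forall>b\<in>K - B K. b \<in> M \<longrightarrow> a \<in> M))"
proof -
  have p1: "(\<forall>r\<in>{mkr (f ` KK) {}}. sat_rule M r) \<longleftrightarrow> f ` KK \<inter> M \<noteq> {}"
    by (simp add: sat_mkr)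
  have p2: "(\<forall>r\<in>{mkr {} {BAtom (f K), BAtom a} | K a. K \<in> KK \<and> a \<in> A - K}. sat_rule M r)
     \<longleftrightarrow> (\<forall>K\<in>KK. f K \<in> M \<longrightarrow> (\<forall>a\<in>A - K. a \<notin> M))"
    unfolding ball_img2 by (auto simp: sat_mkr)
  have p3: "(\<forall>r\<in>{mkr {} {BAtom (f K), BNot (PosL a)} | K a. K \<in> KK \<and> a \<in> K}. sat_rule M r)
     \<longleftrightarrow> (\<forall>K\<in>KK. f K \<in> M \<longrightarrow> K \<subseteq> M)"
    unfolding ball_img2 by (auto simp: sat_mkr)
  have p4: "(\<forall>r\<in>{mkr {a} {BAtom (f K)} | K a. K \<in> KK \<and> a \<in> B K}. sat_rule M r)
     \<longleftrightarrow> (\<forall>K\<in>KK. f K \<in> M \<longrightarrow> B K \<subseteq> M)"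
    unfolding ball_img2 by (auto simp: sat_mkr)
  have p5: "(\<forall>r\<in>{mkr {a} {BAtom (f K), BAtom b} | K a b. K \<in> KK \<and> a \<in> K - B K \<and> b \<in> K - B K}. sat_rule M r)
     \<longleftrightarrow> (\<forall>K\<in>KK. f K \<in> M \<longrightarrow> (\<forall>a\<in>K - B K. \<forall>b\<in>K - B K. b \<in> M \<longrightarrow> a \<in> M))"
    unfolding ball_img3 by (auto simp: sat_mkr)
  show ?thesis unfolding Rrules_def ball_Un p1 p2 p3 p4 p5
    by (simp only: imp_conjR ball_conj_distrib conj_assoc)
qed

lemma satRred:
  "(\<forall>r\<in>Rrules A KK B f. kept M r \<longrightarrow> sat_rule M' (redrule r)) \<longleftrightarrow>
     (f ` KK \<inter> M' \<noteq> {}) \<and> (\<forall>K\<in>KK. f K \<in> M' \<longrightarrow> (\<forall>a\<in>A - K. a \<notin> M') \<and> K \<subseteq> M \<and> B K \<subseteq> M'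
        \<and> (\<forall>a\<in>K - B K. \<forall>b\<in>K - B K. b \<in> M' \<longrightarrow> a \<in> M'))"
proof -
  have p1: "(\<forall>r\<in>{mkr (f ` KK) {}}. kept M r \<longrightarrow> sat_rule M' (redrule r)) \<longleftrightarrow> f ` KK \<inter> M' \<noteq> {}"
    by (simp add: sat_red_mkr kept_mkr)
  have p2: "(\<forall>r\<in>{mkr {} {BAtom (f K), BAtom a} | K a. K \<in> KK \<and> a \<in> A - K}. kept M r \<longrightarrow> sat_rule M' (redrule r))
     \<longleftrightarrow> (\<forall>K\<in>KK. f K \<in> M' \<longrightarrow> (\<forall>a\<in>A - K. a \<notin> M'))"
    unfolding ball_img2 by (auto simp: sat_red_mkr kept_mkr)
  have p3: "(\<forall>r\<in>{mkr {} {BAtom (f K), BNot (PosL a)} | K a. K \<in> KK \<and> a \<in> K}. kept M r \<longrightarrow> sat_rule M' (redrule r))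
     \<longleftrightarrow> (\<forall>K\<in>KK. f K \<in> M' \<longrightarrow> K \<subseteq> M)"
    unfolding ball_img2 by (auto simp: sat_red_mkr kept_mkr)
  have p4: "(\<forall>r\<in>{mkr {a} {BAtom (f K)} | K a. K \<in> KK \<and> a \<in> B K}. kept M r \<longrightarrow> sat_rule M' (redrule r))
     \<longleftrightarrow> (\<forall>K\<in>KK. f K \<in> M' \<longrightarrow> B K \<subseteq> M')"
    unfolding ball_img2 by (auto simp: sat_red_mkr kept_mkr)
  have p5: "(\<forall>r\<in>{mkr {a} {BAtom (f K), BAtom b} | K a b. K \<in> KK \<and> a \<in> K - B K \<and> b \<in> K - B K}. kept M r \<longrightarrow> sat_rule M' (redrule r))
     \<longleftrightarrow> (\<forall>K\<in>KK. f K \<in> M' \<longrightarrow> (\<forall>a\<in>K - B K. \<forall>b\<in>K - B K. b \<in> M' \<longrightarrow> a \<in> M'))"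
    unfolding ball_img3 by (auto simp: sat_red_mkr kept_mkr)
  show ?thesis unfolding Rrules_def ball_Un p1 p2 p3 p4 p5
    by (simp only: imp_conjR ball_conj_distrib conj_assoc)
qed


lemma AS_R:
  assumes Q: "atoms Q = A" "\<forall>r\<in>rules Q. over A r"
    and U: "atoms U = A \<union> (A \<union> f ` KK)" "rules U = rules Q \<union> Rrules A KK B f"
    and f: "inj_on f KK" "f ` KK \<inter> A = {}"
    and K: "\<forall>K\<in>KK. K \<subseteq> A" "\<forall>K\<in>KK. B K \<subseteq> K"
  shows "AS U = (\<lambda>K. insert (f K) K) ` {K\<in>KK. K \<in> Mods (gl_reduct Q K) \<and> (B K = K \<or> B K \<notin> Mods (gl_reduct Q K))}"
proof -
  note mU = Mods_comp[OF U Q]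
  note gU = Mods_gl_comp[OF U Q]
  have fK: "f K \<notin> J" if "K \<in> KK" "J \<in> KK" for K J using that f(2) K(1) by blast
  have ins_int: "insert (f K) Z \<inter> A = Z" if "K \<in> KK" "Z \<subseteq> A" for K Z using that f(2) by blast
  show ?thesis
  proof (intro equalityI subsetI)
    fix M assume "M \<in> AS U"
    then have M: "M \<in> Mods U" and mn: "\<not> (\<exists>M'. M' \<subset> M \<and> M' \<in> Mods (gl_reduct U M))"
      unfolding AS_def by auto
    then have M1: "M \<subseteq> A \<union> f ` KK" "M \<inter> A \<in> Mods Q" and M2: "\<forall>r\<in>Rrules A KK B f. sat_rule M r"
      using M unfolding mU by auto
    have Rc: "(f ` KK \<inter> M \<noteq> {}) \<and> (\<forall>J\<in>KK. f J \<in> M \<longrightarrow> (\<forall>a\<in>A - J. a \<notin> M) \<and> J \<subseteq> M \<and> B J \<subseteq> M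
        \<and> (\<forall>a\<in>J - B J. \<forall>b\<in>J - B J. b \<in> M \<longrightarrow> a \<in> M))" using M2 unfolding satR .
    then have c: "\<forall>J\<in>KK. f J \<in> M \<longrightarrow> (\<forall>a\<in>A - J. a \<notin> M) \<and> J \<subseteq> M \<and> B J \<subseteq> M
        \<and> (\<forall>a\<in>J - B J. \<forall>b\<in>J - B J. b \<in> M \<longrightarrow> a \<in> M)" by (rule conjunct2)
    from Rc have "f ` KK \<inter> M \<noteq> {}" by (rule conjunct1)
    then obtain K where k: "K \<in> KK" "f K \<in> M" by blast
    have MA: "M \<inter> A = J" if "J \<in> KK" "f J \<in> M" for J
    proof -
      have "(\<forall>a\<in>A - J. a \<notin> M) \<and> J \<subseteq> M" using c that by blast
      moreover have "J \<subseteq> A" using that K(1) by blast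
      ultimately show ?thesis by blast
    qed
    have Meq: "M = insert (f K) K"
    proof (intro equalityI subsetI)
      fix x assume x: "x \<in> M"
      show "x \<in> insert (f K) K"
      proof (cases "x \<in> A")
        case True then show ?thesis using x MA[OF k] by blast
      next
        case False
        then obtain J where "J \<in> KK" "x = f J" using x M1(1) by blast
        then have "M \<inter> A = J" using MA x by blast
        then have "J = K" using MA[OF k] by simp
        then show ?thesis using \<open>x = f J\<close> by simp
      qed
    next
      fix x assume "x \<in> insert (f K) K" then show "x \<in> M" using k c by blast
    qed
    have KQ: "K \<in> Mods Q" using M1(2) MA[OF k] by simp
    then have KG: "K \<in> Mods (gl_reduct Q K)" using Mods_gl_self by blast
    have "B K = K \<or> B K \<notin> Mods (gl_reduct Q K)"
    proof (rule ccontr)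
      assume "\<not> (B K = K \<or> B K \<notin> Mods (gl_reduct Q K))"
      then have nb: "B K \<noteq> K" "B K \<in> Mods (gl_reduct Q K)" by auto
      let ?M' = "insert (f K) (B K)"
      have bk: "B K \<subset> K" using nb(1) K(2) k(1) by blast
      have fkk: "f K \<notin> K" using fK[OF k(1) k(1)] .
      obtain x where x: "x \<in> K" "x \<notin> B K" using bk by blast
      then have "x \<notin> ?M'" using fkk by auto
      moreover have "x \<in> M" unfolding Meq using x by blast
      moreover have "?M' \<subseteq> M" unfolding Meq using bk by blast
      ultimately have sub: "?M' \<subset> M" by blast
      have BA: "B K \<subseteq> A" using K k(1) by blast
      have "?M' \<in> Mods (gl_reduct U M)"
        unfolding gU
      proof (intro conjI)
        show "?M' \<subseteq> A \<union> (A \<union> f ` KK)" using BA k(1) by blast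
        show "?M' \<inter> A \<in> Mods (gl_reduct Q (M \<inter> A))"
          using nb(2) MA[OF k] ins_int[OF k(1) BA] by simp
        show "\<forall>r\<in>Rrules A KK B f. kept M r \<longrightarrow> sat_rule ?M' (redrule r)"
          unfolding satRred
        proof (rule conjI)
          show "f ` KK \<inter> ?M' \<noteq> {}" using k(1) by blast
        next
          show "\<forall>J\<in>KK. f J \<in> ?M' \<longrightarrow> (\<forall>a\<in>A - J. a \<notin> ?M') \<and> J \<subseteq> M \<and> B J \<subseteq> ?M'
            \<and> (\<forall>a\<in>J - B J. \<forall>b\<in>J - B J. b \<in> ?M' \<longrightarrow> a \<in> ?M')"
          proof (rule ballI, rule impI)
          fix J assume J: "J \<in> KK" "f J \<in> ?M'"
          have "f J \<notin> B K" using BA f(2) J(1) by blast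
          then have "f J = f K" using J(2) by blast
          then have JK: "J = K" using f(1) J(1) k(1) by (simp add: inj_on_eq_iff)
          have fKA: "f K \<notin> A" using f(2) k(1) by blast
          have KA: "K \<subseteq> A" using K(1) k(1) by blast
          have "\<forall>a\<in>A - J. a \<notin> ?M'" unfolding JK using fKA nb(1) K(2) k(1) by blast
          moreover have "J \<subseteq> M" unfolding JK Meq by blast
          moreover have "B J \<subseteq> ?M'" unfolding JK by blast
          moreover have "\<forall>a\<in>J - B J. \<forall>b\<in>J - B J. b \<in> ?M' \<longrightarrow> a \<in> ?M'"
            unfolding JK using fKA KA by blast
          ultimately show "(\<forall>a\<in>A - J. a \<notin> ?M') \<and> J \<subseteq> M \<and> B J \<subseteq> ?M'
            \<and> (\<forall>a\<in>J - B J. \<forall>b\<in>J - B J. b \<in> ?M' \<longrightarrow> a \<in> ?M')" by blast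
          qed
        qed
      qed
      then show False using mn sub by blast
    qed
    then show "M \<in> (\<lambda>K. insert (f K) K) ` {K\<in>KK. K \<in> Mods (gl_reduct Q K) \<and> (B K = K \<or> B K \<notin> Mods (gl_reduct Q K))}"
      using Meq k(1) KG by blast
  next
    fix M assume "M \<in> (\<lambda>K. insert (f K) K) ` {K\<in>KK. K \<in> Mods (gl_reduct Q K) \<and> (B K = K \<or> B K \<notin> Mods (gl_reduct Q K))}"
    then obtain K where k: "K \<in> KK" "K \<in> Mods (gl_reduct Q K)" "B K = K \<or> B K \<notin> Mods (gl_reduct Q K)"
      and Meq: "M = insert (f K) K" by blast
    have KA: "K \<subseteq> A" using K k(1) by blast
    have MA: "M \<inter> A = K" using Meq ins_int[OF k(1) KA] by simp
    have onlyK: "J = K" if "J \<in> KK" "f J \<in> M" for J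
    proof -
      have "f J \<notin> K" using fK[OF that(1) k(1)] .
      then have "f J = f K" using that(2) Meq by blast
      then show ?thesis using f(1) that(1) k(1) by (simp add: inj_on_eq_iff)
    qed
    have "M \<in> Mods U" unfolding mU
    proof (intro conjI)
      show "M \<subseteq> A \<union> (A \<union> f ` KK)" using Meq KA k(1) by blast
      show "M \<inter> A \<in> Mods Q" using MA k(2) Mods_gl_self by blast
      show "\<forall>r\<in>Rrules A KK B f. sat_rule M r" unfolding satR
      proof (rule conjI)
        show "f ` KK \<inter> M \<noteq> {}" using Meq k(1) by blast
      next
        show "\<forall>J\<in>KK. f J \<in> M \<longrightarrow> (\<forall>a\<in>A - J. a \<notin> M) \<and> J \<subseteq> M \<and> B J \<subseteq> M
            \<and> (\<forall>a\<in>J - B J. \<forall>b\<in>J - B J. b \<in> M \<longrightarrow> a \<in> M)"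
        proof (rule ballI, rule impI)
          fix J assume J: "J \<in> KK" "f J \<in> M"
          then have JK: "J = K" by (rule onlyK)
          have fKA: "f K \<notin> A" using f(2) k(1) by blast
          have "\<forall>a\<in>A - J. a \<notin> M" unfolding JK Meq using fKA by blast
          moreover have "J \<subseteq> M" unfolding JK Meq by blast
          moreover have "B J \<subseteq> M" unfolding JK Meq using K(2) k(1) by blast
          moreover have "\<forall>a\<in>J - B J. \<forall>b\<in>J - B J. b \<in> M \<longrightarrow> a \<in> M" unfolding JK Meq by blast
          ultimately show "(\<forall>a\<in>A - J. a \<notin> M) \<and> J \<subseteq> M \<and> B J \<subseteq> M
            \<and> (\<forall>a\<in>J - B J. \<forall>b\<in>J - B J. b \<in> M \<longrightarrow> a \<in> M)" by blast
        qed
      qed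
    qed
    moreover have "\<not> (\<exists>M'. M' \<subset> M \<and> M' \<in> Mods (gl_reduct U M))"
    proof
      assume "\<exists>M'. M' \<subset> M \<and> M' \<in> Mods (gl_reduct U M)"
      then obtain M' where M': "M' \<subset> M" "M' \<in> Mods (gl_reduct U M)" by blast
      have gg: "M' \<subseteq> A \<union> (A \<union> f ` KK) \<and> M' \<inter> A \<in> Mods (gl_reduct Q (M \<inter> A))
            \<and> (\<forall>r\<in>Rrules A KK B f. kept M r \<longrightarrow> sat_rule M' (redrule r))"
        using M'(2) unfolding gU .
      then have g1: "M' \<inter> A \<in> Mods (gl_reduct Q K)" using MA by simp
      from gg have g2: "\<forall>r\<in>Rrules A KK B f. kept M r \<longrightarrow> sat_rule M' (redrule r)" by blast
      then have g3: "(f ` KK \<inter> M' \<noteq> {}) \<and> (\<forall>K\<in>KK. f K \<in> M' \<longrightarrow> (\<forall>a\<in>A - K. a \<notin> M') \<and> K \<subseteq> M \<and> B K \<subseteq> M'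
        \<and> (\<forall>a\<in>K - B K. \<forall>b\<in>K - B K. b \<in> M' \<longrightarrow> a \<in> M'))" unfolding satRred .
      then have "f ` KK \<inter> M' \<noteq> {}" by (rule conjunct1)
      then obtain J where J: "J \<in> KK" "f J \<in> M'" by blast
      then have "J = K" using onlyK M'(1) by (meson psubsetE subsetD)
      then have fk: "f K \<in> M'" using J by simp
      from g3 have "\<forall>K\<in>KK. f K \<in> M' \<longrightarrow> (\<forall>a\<in>A - K. a \<notin> M') \<and> K \<subseteq> M \<and> B K \<subseteq> M'
        \<and> (\<forall>a\<in>K - B K. \<forall>b\<in>K - B K. b \<in> M' \<longrightarrow> a \<in> M')" by (rule conjunct2)
      then have "(\<forall>a\<in>A - K. a \<notin> M') \<and> K \<subseteq> M \<and> B K \<subseteq> M'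
        \<and> (\<forall>a\<in>K - B K. \<forall>b\<in>K - B K. b \<in> M' \<longrightarrow> a \<in> M')" using k(1) fk by blast
      then have cc: "B K \<subseteq> M'" "\<forall>a\<in>K - B K. \<forall>b\<in>K - B K. b \<in> M' \<longrightarrow> a \<in> M'" by blast+
      have ZK: "M' \<inter> A \<subseteq> K" using M'(1) MA by blast
      show False
      proof (cases "\<exists>b\<in>K - B K. b \<in> M'")
        case True
        then have "K \<subseteq> M'" using cc by blast
        then have "M \<subseteq> M'" using Meq fk by blast
        then show False using M'(1) by blast
      next
        case False
        then have Z: "M' \<inter> A = B K" using ZK cc(1) K k(1) KA by blast
        show False
        proof (cases "B K = K")
          case True
          then have "K \<subseteq> M'" using cc by blast
          then have "M \<subseteq> M'" using Meq fk by blast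
          then show False using M'(1) by blast
        next
          case False
          then show False using k(3) g1 Z by simp
        qed
      qed
    qed
    ultimately show "M \<in> AS U" unfolding AS_def by blast
  qed
qed



lemma fresh_fun:
  assumes "infinite (UNIV :: 'a set)" "finite (A :: 'a set)" "finite (KK :: 'b set)"
  shows "\<exists>f :: 'b \<Rightarrow> 'a. inj_on f KK \<and> f ` KK \<inter> A = {}"
proof -
  have "infinite (UNIV - A)" using assms(1,2) by (simp add: Diff_infinite_finite)
  then obtain g :: "nat \<Rightarrow> 'a" where g: "inj g" "range g \<subseteq> UNIV - A"
    using infinite_countable_subset by blast
  obtain h :: "'b \<Rightarrow> nat" and n where h: "h ` KK = {i. i < n}" "inj_on h KK"
    using finite_imp_inj_to_nat_seg[OF assms(3)] by blast
  have "inj_on (g \<circ> h) KK" using g(1) h(2) by (simp add: comp_inj_on inj_on_subset)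
  moreover have "(g \<circ> h) ` KK \<inter> A = {}" using g(2) by auto
  ultimately show ?thesis by blast
qed

lemma compat_unique:
  assumes "compatible E \<Phi> S" "compatible E \<Psi> S" "\<Phi> \<subseteq> E" "\<Psi> \<subseteq> E"
  shows "\<Phi> = \<Psi>"
  using assms unfolding compatible_def by blast

lemma er_id: "epos r = {} \<Longrightarrow> eneg r = {} \<Longrightarrow> er \<Psi> (r :: 'a rule) = r"
  by (cases r) (simp add: er_def)

lemma Rrules_shape:
  assumes "\<forall>K\<in>KK. K \<subseteq> A" "\<forall>K\<in>KK. B K \<subseteq> K" "r \<in> Rrules A KK B f"
  shows "head r \<subseteq> A \<union> f ` KK \<and> bodyel_atom ` body r \<subseteq> A \<union> f ` KK \<and> epos r = {} \<and> eneg r = {}"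
proof -
  from assms(3) consider (a) "r = mkr (f ` KK) {}"
    | (b) K a where "r = mkr {} {BAtom (f K), BAtom a}" "K \<in> KK" "a \<in> A - K"
    | (c) K a where "r = mkr {} {BAtom (f K), BNot (PosL a)}" "K \<in> KK" "a \<in> K"
    | (d) K a where "r = mkr {a} {BAtom (f K)}" "K \<in> KK" "a \<in> B K"
    | (e) K a b where "r = mkr {a} {BAtom (f K), BAtom b}" "K \<in> KK" "a \<in> K - B K" "b \<in> K - B K"
    unfolding Rrules_def by blast
  then show ?thesis
  proof cases
    case a then show ?thesis by (simp add: mkr_def)
  next
    case (b K a) then show ?thesis by (simp add: mkr_def)
  next
    case (c K a)
    then have "a \<in> A" using assms(1) by blast
    then show ?thesis using c by (simp add: mkr_def)
  next
    case (d K a)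
    then have "a \<in> A" using assms(1,2) by blast
    then show ?thesis using d by (simp add: mkr_def)
  next
    case (e K a b)
    then have "a \<in> A" "b \<in> A" using assms(1) by blast+
    then show ?thesis using e by (simp add: mkr_def)
  qed
qed

definition Rprog :: "'a set \<Rightarrow> 'a set set \<Rightarrow> ('a set \<Rightarrow> 'a set) \<Rightarrow> ('a set \<Rightarrow> 'a) \<Rightarrow> 'a elp" where
  "Rprog A KK B f = \<lparr>atoms = A \<union> f ` KK, elits = {}, rules = Rrules A KK B f\<rparr>"

lemma rules_epi_R:
  assumes "\<forall>K\<in>KK. K \<subseteq> A" "\<forall>K\<in>KK. B K \<subseteq> K"
  shows "rules (epi_reduct (Rprog A KK B f) \<Psi>) = Rrules A KK B f"
proof -
  have "\<forall>r\<in>Rrules A KK B f. epos r = {} \<and> eneg r = {}" using Rrules_shape[OF assms] by blast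
  then have "{r \<in> Rrules A KK B f. eneg r \<inter> \<Psi> = {}} = Rrules A KK B f" by auto
  moreover have "er \<Psi> ` Rrules A KK B f = id ` Rrules A KK B f"
  proof (rule image_cong[OF refl])
    fix x assume "x \<in> Rrules A KK B f"
    then have "epos x = {}" "eneg x = {}" using \<open>\<forall>r\<in>Rrules A KK B f. epos r = {} \<and> eneg r = {}\<close> by blast+
    then show "er \<Psi> x = id x" using er_id by simp
  qed
  ultimately show ?thesis unfolding rules_epi Rprog_def by simp
qed

lemma wf_R:
  assumes "finite A" "finite KK" "\<forall>K\<in>KK. K \<subseteq> A" "\<forall>K\<in>KK. B K \<subseteq> K"
  shows "wf_elp (Rprog A KK B f)" "plain (Rprog A KK B f)"
proof -
  have "\<forall>r\<in>Rrules A KK B f. head r \<subseteq> A \<union> f ` KK \<and> bodyel_atom ` body r \<subseteq> A \<union> f ` KK \<and> epos r = {} \<and> eneg r = {}"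
    using Rrules_shape[OF assms(3,4)] by blast
  then show "wf_elp (Rprog A KK B f)" using assms(1,2) unfolding wf_elp_def Rprog_def by simp
  show "plain (Rprog A KK B f)" unfolding plain_def Rprog_def by simp
qed

lemma sat_lit_ins: "lit_atom l \<in> A \<Longrightarrow> x \<notin> A \<Longrightarrow> sat_lit (insert x K) l = sat_lit K l"
  by (cases l) auto

lemma compat_lift:
  assumes "\<forall>l\<in>E. lit_atom l \<in> A" "\<forall>K\<in>S. f K \<notin> A" "\<Psi> \<subseteq> E"
  shows "compatible E \<Psi> ((\<lambda>K. insert (f K) K) ` S) \<longleftrightarrow> compatible E \<Psi> S"
proof -
  have e: "sat_lit (insert (f K) K) l = sat_lit K l" if "l \<in> E" "K \<in> S" for l K
  proof -
    have "lit_atom l \<in> A" using assms(1) that(1) by blast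
    moreover have "f K \<notin> A" using assms(2) that(2) by blast
    ultimately show ?thesis by (rule sat_lit_ins)
  qed
  have ex: "(\<exists>I\<in>(\<lambda>K. insert (f K) K) ` S. \<not> sat_lit I l) \<longleftrightarrow> (\<exists>I\<in>S. \<not> sat_lit I l)" if "l \<in> E" for l
  proof -
    have "(\<exists>I\<in>(\<lambda>K. insert (f K) K) ` S. \<not> sat_lit I l) \<longleftrightarrow> (\<exists>K\<in>S. \<not> sat_lit (insert (f K) K) l)"
      by blast
    also have "\<dots> \<longleftrightarrow> (\<exists>I\<in>S. \<not> sat_lit I l)" using e[OF that] by (intro bex_cong) simp_all
    finally show ?thesis .
  qed
  have al: "(\<forall>I\<in>(\<lambda>K. insert (f K) K) ` S. sat_lit I l) \<longleftrightarrow> (\<forall>I\<in>S. sat_lit I l)" if "l \<in> E" for l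
  proof -
    have "(\<forall>I\<in>(\<lambda>K. insert (f K) K) ` S. sat_lit I l) \<longleftrightarrow> (\<forall>K\<in>S. sat_lit (insert (f K) K) l)"
      by simp
    also have "\<dots> \<longleftrightarrow> (\<forall>I\<in>S. sat_lit I l)" using e[OF that] by (intro ball_cong) simp_all
    finally show ?thesis .
  qed
  have a: "(\<forall>l\<in>\<Psi>. \<exists>I\<in>(\<lambda>K. insert (f K) K) ` S. \<not> sat_lit I l) \<longleftrightarrow> (\<forall>l\<in>\<Psi>. \<exists>I\<in>S. \<not> sat_lit I l)"
  proof (rule ball_cong[OF refl])
    fix l assume "l \<in> \<Psi>" then show "(\<exists>I\<in>(\<lambda>K. insert (f K) K) ` S. \<not> sat_lit I l) \<longleftrightarrow> (\<exists>I\<in>S. \<not> sat_lit I l)"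
      using ex assms(3) by blast
  qed
  have b: "(\<forall>l\<in>E - \<Psi>. \<forall>I\<in>(\<lambda>K. insert (f K) K) ` S. sat_lit I l) \<longleftrightarrow> (\<forall>l\<in>E - \<Psi>. \<forall>I\<in>S. sat_lit I l)"
  proof (rule ball_cong[OF refl])
    fix l assume "l \<in> E - \<Psi>" then show "(\<forall>I\<in>(\<lambda>K. insert (f K) K) ` S. sat_lit I l) \<longleftrightarrow> (\<forall>I\<in>S. sat_lit I l)"
      using al by blast
  qed
  show ?thesis unfolding compatible_def a b by simp
qed



definition Gset :: "'a elp \<Rightarrow> 'a set set \<Rightarrow> ('a set \<Rightarrow> 'a set) \<Rightarrow> 'a lit set \<Rightarrow> 'a set set" where
  "Gset P KK B \<Psi> = {K\<in>KK. K \<in> Mods (gl_reduct (epi_reduct P \<Psi>) K)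
      \<and> (B K = K \<or> B K \<notin> Mods (gl_reduct (epi_reduct P \<Psi>) K))}"

lemma AS_union_R:
  assumes "wf_elp P" "atoms P = A" "\<forall>K\<in>KK. K \<subseteq> A" "\<forall>K\<in>KK. B K \<subseteq> K" "inj_on f KK" "f ` KK \<inter> A = {}"
  shows "AS (epi_reduct (elp_union P (Rprog A KK B f)) \<Psi>) = (\<lambda>K. insert (f K) K) ` Gset P KK B \<Psi>"
  unfolding Gset_def
proof (rule AS_R[OF _ _ _ _ assms(5,6,3,4)])
  show "atoms (epi_reduct P \<Psi>) = A" using assms(2) by simp
  show "\<forall>r\<in>rules (epi_reduct P \<Psi>). over A r" using epi_over[OF assms(1)] assms(2) by blast
  show "atoms (epi_reduct (elp_union P (Rprog A KK B f)) \<Psi>) = A \<union> (A \<union> f ` KK)"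
    using assms(2) by (simp add: Rprog_def)
  show "rules (epi_reduct (elp_union P (Rprog A KK B f)) \<Psi>) = rules (epi_reduct P \<Psi>) \<union> Rrules A KK B f"
    unfolding epi_union_rules rules_epi_R[OF assms(3,4)] ..
qed

lemma cwv_guess_R:
  assumes "wf_elp P" "atoms P = A" "\<forall>K\<in>KK. K \<subseteq> A" "\<forall>K\<in>KK. B K \<subseteq> K" "inj_on f KK" "f ` KK \<inter> A = {}"
  shows "cwv_guess (elp_union P (Rprog A KK B f)) \<Psi> \<longleftrightarrow> \<Psi> \<subseteq> elits P \<and> compatible (elits P) \<Psi> (Gset P KK B \<Psi>)"
proof -
  have e: "elits (elp_union P (Rprog A KK B f)) = elits P" by (simp add: Rprog_def)
  have l: "\<forall>l\<in>elits P. lit_atom l \<in> A" using wf_lit[OF assms(1)] assms(2) by blast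
  have g: "\<forall>K\<in>Gset P KK B \<Psi>. f K \<notin> A" using assms(6) unfolding Gset_def by blast
  show ?thesis unfolding cwv_guess_def e AS_union_R[OF assms] using compat_lift[OF l g] by blast
qed

lemma lift_inj:
  assumes "\<forall>K\<in>KK. K \<subseteq> A" "f ` KK \<inter> A = {}" "S1 \<subseteq> KK" "S2 \<subseteq> KK"
    "(\<lambda>K. insert (f K) K) ` S1 = (\<lambda>K. insert (f K) K) ` S2"
  shows "S1 = S2"
proof -
  have "inj_on (\<lambda>K. insert (f K) K) KK"
  proof (rule inj_onI)
    fix x y assume xy: "x \<in> KK" "y \<in> KK" "insert (f x) x = insert (f y) y"
    have "f x \<notin> A" "x \<subseteq> A" "f y \<notin> A" "y \<subseteq> A" using xy(1,2) assms(1,2) by blast+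
    then have h: "insert (f x) x \<inter> A = x" "insert (f y) y \<inter> A = y" by (simp_all add: Int_absorb2)
    have "x = insert (f x) x \<inter> A" using h(1) by (rule sym)
    also have "\<dots> = insert (f y) y \<inter> A" using xy(3) by (rule arg_cong)
    also have "\<dots> = y" by (rule h(2))
    finally show "x = y" .
  qed
  then show ?thesis using assms(3,4,5) by (simp add: inj_on_image_eq_iff)
qed

lemma distinguish:
  assumes inf: "infinite (UNIV :: 'a set)"
    and w: "wf_elp Pa" "wf_elp Pb" "atoms Pa = A" "atoms Pb = A" "elits Pa = E" "elits Pb = E"
    and K: "\<forall>K\<in>KK. K \<subseteq> A" "\<forall>K\<in>KK. B K \<subseteq> K" and ph: "\<Phi> \<subseteq> E"
    and c1: "compatible E \<Phi> (Gset Pa KK B \<Phi>)"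
    and c2: "Gset Pa KK B \<Phi> \<noteq> Gset Pb KK B \<Phi>"
    and c3: "\<forall>\<Psi>\<subseteq>E. \<Phi> \<subset> \<Psi> \<longrightarrow> \<not> compatible E \<Psi> (Gset Pa KK B \<Psi>)"
  shows "\<exists>R :: 'a elp. wf_elp R \<and> plain R \<and> CWVs (elp_union Pa R) \<noteq> CWVs (elp_union Pb R)
            \<and> WVs (elp_union Pa R) \<noteq> WVs (elp_union Pb R)"
proof -
  have fA: "finite A" using w(1,3) unfolding wf_elp_def by blast
  have "KK \<subseteq> Pow A" using K(1) by blast
  then have fK: "finite KK" by (rule finite_subset) (simp add: fA)
  obtain f :: "'a set \<Rightarrow> 'a" where f: "inj_on f KK" "f ` KK \<inter> A = {}"
    using fresh_fun[OF inf fA fK] by blast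
  let ?R = "Rprog A KK B f"
  let ?L = "\<lambda>S. (\<lambda>K. insert (f K) K) ` S"
  let ?W = "?L (Gset Pa KK B \<Phi>)"
  note ga = cwv_guess_R[OF w(1,3) K f]
  note gb = cwv_guess_R[OF w(2,4) K f]
  note asa = AS_union_R[OF w(1,3) K f]
  note asb = AS_union_R[OF w(2,4) K f]
  have gA: "cwv_guess (elp_union Pa ?R) \<Phi>" using ga w(5) ph c1 by simp
  have noPsi: "\<not> (\<exists>\<Psi>. cwv_guess (elp_union Pa ?R) \<Psi> \<and> \<Phi> \<subset> \<Psi>)"
  proof
    assume "\<exists>\<Psi>. cwv_guess (elp_union Pa ?R) \<Psi> \<and> \<Phi> \<subset> \<Psi>"
    then obtain \<Psi> where "cwv_guess (elp_union Pa ?R) \<Psi>" "\<Phi> \<subset> \<Psi>" by blast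
    then have "\<Psi> \<subseteq> E" "compatible E \<Psi> (Gset Pa KK B \<Psi>)" "\<Phi> \<subset> \<Psi>" using ga w(5) by auto
    then show False using c3 by blast
  qed
  have wa: "?W = AS (epi_reduct (elp_union Pa ?R) \<Phi>)" using asa[of \<Phi>] by simp
  have inW: "?W \<in> WVs (elp_union Pa ?R)" unfolding WVs_def mem_Collect_eq
    by (rule exI[of _ \<Phi>]) (use gA noPsi wa in blast)
  have inC: "?W \<in> CWVs (elp_union Pa ?R)" unfolding CWVs_def mem_Collect_eq
    by (rule exI[of _ \<Phi>]) (use gA wa in blast)
  have notC: "?W \<notin> CWVs (elp_union Pb ?R)"
  proof
    assume "?W \<in> CWVs (elp_union Pb ?R)"
    then obtain \<Psi> where p: "cwv_guess (elp_union Pb ?R) \<Psi>" "?W = AS (epi_reduct (elp_union Pb ?R) \<Psi>)"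
      unfolding CWVs_def by blast
    then have p1: "\<Psi> \<subseteq> E" "compatible E \<Psi> (Gset Pb KK B \<Psi>)" using gb w(6) by auto
    have "?W = ?L (Gset Pb KK B \<Psi>)" using p(2) asb by simp
    then have eq: "Gset Pa KK B \<Phi> = Gset Pb KK B \<Psi>"
      by (rule lift_inj[OF K(1) f(2), rotated 2]) (auto simp: Gset_def)
    then have "\<Psi> = \<Phi>" using compat_unique[OF p1(2) _ p1(1) ph] c1 by simp
    then show False using eq c2 by simp
  qed
  have notW: "?W \<notin> WVs (elp_union Pb ?R)" using notC unfolding WVs_def CWVs_def by blast
  have "CWVs (elp_union Pa ?R) \<noteq> CWVs (elp_union Pb ?R)" using inC notC by blast
  moreover have "WVs (elp_union Pa ?R) \<noteq> WVs (elp_union Pb ?R)" using inW notW by blast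
  ultimately show ?thesis using wf_R[OF fA fK K, of f] by blast
qed



lemma Mods_sub: "M \<in> Mods P \<Longrightarrow> M \<subseteq> atoms P"
  unfolding Mods_def by blast

lemma case_gen:
  assumes inf: "infinite (UNIV :: 'a set)"
    and w: "wf_elp Pa" "wf_elp Pb" "atoms Pa = A" "atoms Pb = A" "elits Pa = E" "elits Pb = E"
    and ph: "\<Phi> \<subseteq> E"
    and W: "W \<subseteq> Mods (epi_reduct Pa \<Phi>)" "compatible E \<Phi> W"
    and Y: "Y \<subseteq> A"
    and B: "\<forall>K. K \<noteq> Y \<longrightarrow> B K = K" "B Y \<subseteq> Y"
    and h1: "Y \<in> Gset Pa (insert Y W) B \<Phi> \<longleftrightarrow> (\<forall>l\<in>E - \<Phi>. sat_lit Y l)"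
    and h2: "Y \<in> Gset Pa (insert Y W) B \<Phi> \<longleftrightarrow> Y \<notin> Gset Pb (insert Y W) B \<Phi>"
  shows "\<exists>R :: 'a elp. wf_elp R \<and> plain R \<and> CWVs (elp_union Pa R) \<noteq> CWVs (elp_union Pb R)
            \<and> WVs (elp_union Pa R) \<noteq> WVs (elp_union Pb R)"
proof -
  let ?KK = "insert Y W"
  have Wsat: "\<forall>K\<in>W. \<forall>l\<in>E - \<Phi>. sat_lit K l" using W(2) unfolding compatible_def by blast
  have KA: "\<forall>K\<in>?KK. K \<subseteq> A"
  proof
    fix K assume "K \<in> ?KK"
    then show "K \<subseteq> A"
    proof
      assume "K = Y" then show ?thesis using Y by simp
    next
      assume "K \<in> W" then have "K \<in> Mods (epi_reduct Pa \<Phi>)" using W(1) by blast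
      then show ?thesis using Mods_sub w(3) by fastforce
    qed
  qed
  have KB: "\<forall>K\<in>?KK. B K \<subseteq> K"
  proof
    fix K assume "K \<in> ?KK"
    show "B K \<subseteq> K" proof (cases "K = Y")
      case True then show ?thesis using B(2) by simp
    next
      case False then show ?thesis using B(1) by simp
    qed
  qed
  have WG: "W \<subseteq> Gset Pa ?KK B \<Phi>"
  proof
    fix K assume K: "K \<in> W"
    show "K \<in> Gset Pa ?KK B \<Phi>"
    proof (cases "K = Y")
      case True then show ?thesis using h1 Wsat K by blast
    next
      case False
      have "K \<in> Mods (gl_reduct (epi_reduct Pa \<Phi>) K)" using K W(1) Mods_gl_self by blast
      then show ?thesis unfolding Gset_def using False B(1) K by simp
    qed
  qed
  have c1: "compatible E \<Phi> (Gset Pa ?KK B \<Phi>)"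
    unfolding compatible_def
  proof (intro conjI)
    show "Gset Pa ?KK B \<Phi> \<noteq> {}" using WG W(2) unfolding compatible_def by blast
    show "\<forall>l\<in>\<Phi>. \<exists>I\<in>Gset Pa ?KK B \<Phi>. \<not> sat_lit I l" using WG W(2) unfolding compatible_def by blast
    show "\<forall>l\<in>E - \<Phi>. \<forall>I\<in>Gset Pa ?KK B \<Phi>. sat_lit I l"
    proof (intro ballI)
      fix l I assume l: "l \<in> E - \<Phi>" and I: "I \<in> Gset Pa ?KK B \<Phi>"
      then have "I \<in> ?KK" unfolding Gset_def by blast
      then show "sat_lit I l"
      proof
        assume "I = Y" then show ?thesis using h1 I l by blast
      next
        assume "I \<in> W" then show ?thesis using Wsat l by blast
      qed
    qed
  qed
  have c2: "Gset Pa ?KK B \<Phi> \<noteq> Gset Pb ?KK B \<Phi>" using h2 by blast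
  have c3: "\<forall>\<Psi>\<subseteq>E. \<Phi> \<subset> \<Psi> \<longrightarrow> \<not> compatible E \<Psi> (Gset Pa ?KK B \<Psi>)"
  proof (intro allI impI notI)
    fix \<Psi> assume ps: "\<Psi> \<subseteq> E" "\<Phi> \<subset> \<Psi>" and cp: "compatible E \<Psi> (Gset Pa ?KK B \<Psi>)"
    have vio: "\<not> sat_lit Y l \<and> Y \<in> Gset Pa ?KK B \<Psi>" if "l \<in> \<Psi> - \<Phi>" for l
    proof -
      have lP: "l \<in> \<Psi>" "l \<notin> \<Phi>" using that by simp_all
      have lE: "l \<in> E - \<Phi>" using lP ps(1) by blast
      have "\<forall>l\<in>\<Psi>. \<exists>I\<in>Gset Pa ?KK B \<Psi>. \<not> sat_lit I l" using cp unfolding compatible_def by (rule conjunct1[OF conjunct2])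
      then obtain K where K: "K \<in> Gset Pa ?KK B \<Psi>" "\<not> sat_lit K l" using lP(1) by blast
      then have "K \<in> ?KK" unfolding Gset_def by blast
      moreover have "K \<notin> W"
      proof
        assume "K \<in> W" then have "sat_lit K l" using Wsat lE by blast
        then show False using K(2) by simp
      qed
      ultimately have "K = Y" by simp
      then show ?thesis using K by simp
    qed
    obtain l0 where l0: "l0 \<in> \<Psi> - \<Phi>" using psubset_imp_ex_mem[OF ps(2)] by blast
    have YG: "Y \<in> Gset Pa ?KK B \<Psi>" using vio l0 by blast
    have "gl_reduct (epi_reduct Pa \<Phi>) Y = gl_reduct (epi_reduct Pa \<Psi>) Y"
    proof (rule gl_epi_eq)
      show "\<Phi> \<subseteq> \<Psi>" using ps(2) by (rule psubset_imp_subset)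
      show "\<forall>l\<in>\<Psi> - \<Phi>. \<not> sat_lit Y l" using vio by blast
    qed
    then have "Y \<in> Gset Pa ?KK B \<Phi>" using YG unfolding Gset_def by simp
    then have "sat_lit Y l0" using h1 l0 ps(1) by blast
    then show False using vio l0 by blast
  qed
  show ?thesis by (rule distinguish[OF inf w KA KB ph c1 c2 c3])
qed



lemma flipR: "(\<exists>R :: 'a elp. wf_elp R \<and> plain R \<and> CWVs (elp_union P2 R) \<noteq> CWVs (elp_union P1 R)
            \<and> WVs (elp_union P2 R) \<noteq> WVs (elp_union P1 R)) \<Longrightarrow>
   (\<exists>R :: 'a elp. wf_elp R \<and> plain R \<and> CWVs (elp_union P1 R) \<noteq> CWVs (elp_union P2 R)
            \<and> WVs (elp_union P1 R) \<noteq> WVs (elp_union P2 R))"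
  by metis

lemma unreal_case:
  assumes inf: "infinite (UNIV :: 'a set)"
    and w: "wf_elp P1" "wf_elp P2" "atoms P1 = A" "atoms P2 = A" "elits P1 = E" "elits P2 = E"
    and ph: "\<Phi> \<subseteq> E"
    and I: "I \<subseteq> Mods (epi_reduct P1 \<Phi>)" "compatible E \<Phi> I"
    and nr: "\<not> realizable P2 \<Phi>"
  shows "\<exists>R :: 'a elp. wf_elp R \<and> plain R \<and> CWVs (elp_union P1 R) \<noteq> CWVs (elp_union P2 R)
            \<and> WVs (elp_union P1 R) \<noteq> WVs (elp_union P2 R)"
proof -
  have Isat: "\<forall>K\<in>I. \<forall>l\<in>E - \<Phi>. sat_lit K l" using I(2) unfolding compatible_def by blast
  have KA: "\<forall>K\<in>I. K \<subseteq> A" using I(1) Mods_sub w(3) by fastforce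
  have KB: "\<forall>K\<in>I. id K \<subseteq> K" by simp
  have G1: "Gset P1 I id \<Phi> = I"
  proof (intro equalityI subsetI)
    fix K assume "K \<in> Gset P1 I id \<Phi>" then show "K \<in> I" unfolding Gset_def by blast
  next
    fix K assume K: "K \<in> I"
    then have "K \<in> Mods (gl_reduct (epi_reduct P1 \<Phi>) K)" using I(1) Mods_gl_self by blast
    then show "K \<in> Gset P1 I id \<Phi>" unfolding Gset_def using K by simp
  qed
  have c1: "compatible E \<Phi> (Gset P1 I id \<Phi>)" using G1 I(2) by simp
  have c2: "Gset P1 I id \<Phi> \<noteq> Gset P2 I id \<Phi>"
  proof
    assume eq: "Gset P1 I id \<Phi> = Gset P2 I id \<Phi>"
    have "I \<subseteq> Mods (epi_reduct P2 \<Phi>)"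
    proof
      fix K assume "K \<in> I"
      then have "K \<in> Gset P2 I id \<Phi>" using eq G1 by simp
      then have "K \<in> Mods (gl_reduct (epi_reduct P2 \<Phi>) K)" unfolding Gset_def by blast
      then show "K \<in> Mods (epi_reduct P2 \<Phi>)" using Mods_gl_self by blast
    qed
    then have "realizable P2 \<Phi>" unfolding realizable_def using I(2) w(6) by blast
    then show False using nr by simp
  qed
  have c3: "\<forall>\<Psi>\<subseteq>E. \<Phi> \<subset> \<Psi> \<longrightarrow> \<not> compatible E \<Psi> (Gset P1 I id \<Psi>)"
  proof (intro allI impI notI)
    fix \<Psi> assume ps: "\<Psi> \<subseteq> E" "\<Phi> \<subset> \<Psi>" and cp: "compatible E \<Psi> (Gset P1 I id \<Psi>)"
    obtain l0 where l0: "l0 \<in> \<Psi> - \<Phi>" using psubset_imp_ex_mem[OF ps(2)] by blast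
    have "\<forall>l\<in>\<Psi>. \<exists>K\<in>Gset P1 I id \<Psi>. \<not> sat_lit K l" using cp unfolding compatible_def by (rule conjunct1[OF conjunct2])
    then obtain K where K: "K \<in> Gset P1 I id \<Psi>" "\<not> sat_lit K l0" using l0 by blast
    have "K \<in> I" using K(1) unfolding Gset_def by blast
    moreover have "l0 \<in> E - \<Phi>" using l0 ps(1) by blast
    ultimately have "sat_lit K l0" using Isat by blast
    then show False using K(2) by simp
  qed
  show ?thesis by (rule distinguish[OF inf w KA KB ph c1 c2 c3])
qed

lemma hard_one_side:
  assumes inf: "infinite (UNIV :: 'a set)"
    and w: "wf_elp P1" "wf_elp P2" "atoms P1 = A" "atoms P2 = A" "elits P1 = E" "elits P2 = E"
    and ph: "\<Phi> \<subseteq> E"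
    and p: "p \<in> SE_fun P1 \<Phi>" "p \<notin> SE_fun P2 \<Phi>"
  shows "\<exists>R :: 'a elp. wf_elp R \<and> plain R \<and> CWVs (elp_union P1 R) \<noteq> CWVs (elp_union P2 R)
            \<and> WVs (elp_union P1 R) \<noteq> WVs (elp_union P2 R)"
proof -
  obtain X Y where pXY: "p = (X, Y)" by (cases p)
  have r1: "realizable P1 \<Phi>" using p(1) unfolding SE_fun_def by (auto split: if_splits)
  have se1: "(X, Y) \<in> SE (epi_reduct P1 \<Phi>)" using p(1) r1 pXY unfolding SE_fun_def by simp
  obtain I where I: "I \<subseteq> Mods (epi_reduct P1 \<Phi>)" "compatible E \<Phi> I"
    using r1 w(5) unfolding realizable_def by blast
  show ?thesis
  proof (cases "realizable P2 \<Phi>")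
    case False
    then show ?thesis using unreal_case[OF inf w ph I] by blast
  next
    case True
    have se2: "(X, Y) \<notin> SE (epi_reduct P2 \<Phi>)" using p(2) True pXY unfolding SE_fun_def by simp
    obtain J where J: "J \<subseteq> Mods (epi_reduct P2 \<Phi>)" "compatible E \<Phi> J"
      using True w(6) unfolding realizable_def by blast
    have XY: "X \<subseteq> Y" "Y \<subseteq> A" "Y \<in> Mods (epi_reduct P1 \<Phi>)" "X \<in> Mods (gl_reduct (epi_reduct P1 \<Phi>) Y)"
      using se1 w(3) unfolding SE_def by auto
    define X' where "X' = (if Y \<in> Mods (epi_reduct P2 \<Phi>) then X else Y)"
    define B where "B = (\<lambda>K. if K = Y then X' else K)"
    have X'Y: "X' \<subseteq> Y" unfolding X'_def using XY(1) by simp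
    have B1: "\<forall>K. K \<noteq> Y \<longrightarrow> B K = K" "B Y \<subseteq> Y" unfolding B_def using X'Y by simp_all
    have Y1: "Y \<in> Mods (gl_reduct (epi_reduct P1 \<Phi>) Y)" using XY(3) Mods_gl_self by blast
    have X1: "X' \<in> Mods (gl_reduct (epi_reduct P1 \<Phi>) Y)" unfolding X'_def using XY(4) Y1 by simp
    have m1: "Y \<in> Gset P1 KK B \<Phi> \<longleftrightarrow> X' = Y" if "Y \<in> KK" for KK
      unfolding Gset_def B_def using that Y1 X1 by auto
    have m2: "Y \<in> Gset P2 KK B \<Phi> \<longleftrightarrow> X' \<noteq> Y" if "Y \<in> KK" for KK
    proof (cases "Y \<in> Mods (epi_reduct P2 \<Phi>)")
      case True
      then have x: "X' = X" unfolding X'_def by simp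
      have Y2: "Y \<in> Mods (gl_reduct (epi_reduct P2 \<Phi>) Y)" using True Mods_gl_self by blast
      have X2: "X \<notin> Mods (gl_reduct (epi_reduct P2 \<Phi>) Y)" using gl_SE[OF XY(1) True] se2 by blast
      then have "X \<noteq> Y" using Y2 by blast
      then show ?thesis unfolding Gset_def B_def using that x Y2 X2 by auto
    next
      case False
      then have x: "X' = Y" unfolding X'_def by simp
      have "Y \<notin> Mods (gl_reduct (epi_reduct P2 \<Phi>) Y)" using False Mods_gl_self by blast
      then show ?thesis unfolding Gset_def using x by blast
    qed
    let ?S = "\<forall>l\<in>E - \<Phi>. sat_lit Y l"
    show ?thesis
    proof (cases "?S \<longleftrightarrow> X' = Y")
      case True
      have h1: "Y \<in> Gset P1 (insert Y I) B \<Phi> \<longleftrightarrow> ?S" using m1[of "insert Y I"] True by simp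
      have h2: "Y \<in> Gset P1 (insert Y I) B \<Phi> \<longleftrightarrow> Y \<notin> Gset P2 (insert Y I) B \<Phi>"
        using m1[of "insert Y I"] m2[of "insert Y I"] by simp
      show ?thesis by (rule case_gen[OF inf w ph I XY(2) B1 h1 h2])
    next
      case False
      have h1: "Y \<in> Gset P2 (insert Y J) B \<Phi> \<longleftrightarrow> ?S" using m2[of "insert Y J"] False by simp
      have h2: "Y \<in> Gset P2 (insert Y J) B \<Phi> \<longleftrightarrow> Y \<notin> Gset P1 (insert Y J) B \<Phi>"
        using m1[of "insert Y J"] m2[of "insert Y J"] by simp
      have "\<exists>R :: 'a elp. wf_elp R \<and> plain R \<and> CWVs (elp_union P2 R) \<noteq> CWVs (elp_union P1 R)
            \<and> WVs (elp_union P2 R) \<noteq> WVs (elp_union P1 R)"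
        by (rule case_gen[OF inf w(2,1,4,3,6,5) ph J XY(2) B1 h1 h2])
      then show ?thesis by (rule flipR)
    qed
  qed
qed



lemma hard_dir:
  assumes inf: "infinite (UNIV :: 'a set)"
    and w: "wf_elp P1" "wf_elp P2" "atoms P1 = atoms P2" "elits P1 = elits P2"
    and ns: "\<not> same_SE_fun P1 P2"
  shows "\<exists>R :: 'a elp. wf_elp R \<and> plain R \<and> CWVs (elp_union P1 R) \<noteq> CWVs (elp_union P2 R)
            \<and> WVs (elp_union P1 R) \<noteq> WVs (elp_union P2 R)"
proof -
  obtain \<Phi> where ph: "\<Phi> \<subseteq> elits P1" "SE_fun P1 \<Phi> \<noteq> SE_fun P2 \<Phi>"
    using ns w(4) unfolding same_SE_fun_def by blast
  then obtain p where "(p \<in> SE_fun P1 \<Phi> \<and> p \<notin> SE_fun P2 \<Phi>) \<or> (p \<in> SE_fun P2 \<Phi> \<and> p \<notin> SE_fun P1 \<Phi>)"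
    by blast
  then show ?thesis
  proof
    assume "p \<in> SE_fun P1 \<Phi> \<and> p \<notin> SE_fun P2 \<Phi>"
    then show ?thesis using hard_one_side[OF inf w(1,2) refl w(3)[symmetric] refl w(4)[symmetric] ph(1)] by blast
  next
    assume "p \<in> SE_fun P2 \<Phi> \<and> p \<notin> SE_fun P1 \<Phi>"
    then have "\<exists>R :: 'a elp. wf_elp R \<and> plain R \<and> CWVs (elp_union P2 R) \<noteq> CWVs (elp_union P1 R)
            \<and> WVs (elp_union P2 R) \<noteq> WVs (elp_union P1 R)"
      using hard_one_side[OF inf w(2,1) refl w(3) refl w(4) ph(1)[unfolded w(4)]] by blast
    then show ?thesis by (rule flipR)
  qed
qed

theorem corollary1:
  fixes P1 P2 :: "'a elp"
  assumes "infinite (UNIV :: 'a set)"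
    and "wf_elp P1" and "wf_elp P2"
    and "atoms P1 = atoms P2" and "elits P1 = elits P2"
  shows "(strong_ELP_WV_eq P1 P2 \<longleftrightarrow> same_SE_fun P1 P2)
       \<and> (strong_ASP_WV_eq P1 P2 \<longleftrightarrow> same_SE_fun P1 P2)
       \<and> (strong_ELP_CWV_eq P1 P2 \<longleftrightarrow> same_SE_fun P1 P2)
       \<and> (strong_ASP_CWV_eq P1 P2 \<longleftrightarrow> same_SE_fun P1 P2)"
proof -
  have e: "same_SE_fun P1 P2 \<Longrightarrow> strong_ELP_WV_eq P1 P2 \<and> strong_ELP_CWV_eq P1 P2"
    unfolding strong_ELP_WV_eq_def strong_ELP_CWV_eq_def
    using easy_dir[OF assms(2-5)] by blast
  have ea: "strong_ELP_WV_eq P1 P2 \<Longrightarrow> strong_ASP_WV_eq P1 P2"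
    "strong_ELP_CWV_eq P1 P2 \<Longrightarrow> strong_ASP_CWV_eq P1 P2"
    unfolding strong_ELP_WV_eq_def strong_ASP_WV_eq_def strong_ELP_CWV_eq_def strong_ASP_CWV_eq_def
    by blast+
  have h: "\<not> same_SE_fun P1 P2 \<Longrightarrow> \<not> strong_ASP_WV_eq P1 P2 \<and> \<not> strong_ASP_CWV_eq P1 P2"
  proof -
    assume "\<not> same_SE_fun P1 P2"
    then obtain R :: "'a elp" where R: "wf_elp R" "plain R" "CWVs (elp_union P1 R) \<noteq> CWVs (elp_union P2 R)"
      "WVs (elp_union P1 R) \<noteq> WVs (elp_union P2 R)"
      using hard_dir[OF assms] by blast
    then show ?thesis unfolding strong_ASP_WV_eq_def strong_ASP_CWV_eq_def by blast
  qed
  show ?thesis using e ea h by blast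
qed



end
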